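(* Let $0<\varphi<\theta<1$ be constants, $B_1,B_2,\dots$ i.i.d. Bernoulli with $\mathbb{P}(B_i=1)=\theta$, $\hat\Theta_n=\frac1n\sum_{i=1}^nB_i$, and abbreviate $P_{\mathrm{X}}=P_{\mathrm{X},n}(\hat\Theta_n|\varphi)$, $P_{\mathrm{CH}}=P_{\mathrm{CH},n}(\hat\Theta_n|\varphi)$, $P_{\mathrm{PBR}}=P_{\mathrm{PBR},n}(\hat\Theta_n|\varphi)$. If $\theta\ne1/2$, then $$-\sqrt n\log\left(\frac{\sqrt{2\pi\theta(1-\theta)}\,P_{\mathrm{PBR}}}{\sqrt n\,P_{\mathrm{CH}}}\right)\xrightarrow{D}N\left(0,\frac{(1-2\theta)^2}{4\theta(1-\theta)}\right).$$ If $\varphi\ne\theta(2\theta-1)$, then $$-\sqrt n\log\left(\frac{\theta-\varphi}{1-\varphi}\sqrt{\frac{2\pi(1-\theta)}{\theta}}\,\frac{\sqrt n\,P_{\mathrm{X}}}{P_{\mathrm{CH}}}\right)\xrightarrow{D}N\left(0,\frac{(\theta(1-2\theta)+\varphi)^2}{4(\theta-\varphi)^2\theta(1-\theta)}\right).$$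
   Context: Logarithms are natural; $\xrightarrow{D}$ denotes convergence in distribution. For an integer $n\ge1$, $0<\varphi<1$ and $t\in[0,1]$ with $nt$ an integer (convention $0^0=1$): $P_{\mathrm{X},n}(t|\varphi)=\sum_{k\ge nt}\binom{n}{k}\varphi^k(1-\varphi)^{n-k}$; $P_{\mathrm{CH},n}(t|\varphi)=\left(\frac{\varphi}{t}\right)^{nt}\left(\frac{1-\varphi}{1-t}\right)^{n(1-t)}$ if $t\ge\varphi$, and $=1$ otherwise; $P_{\mathrm{PBR},n}(t|\varphi)=\varphi^{nt}(1-\varphi)^{n(1-t)}(n+1)\binom{n}{nt}$ if $t\ge\varphi$, and $=t^{nt}(1-t)^{n(1-t)}(n+1)\binom{n}{nt}$ otherwise. *)

theory Defs
  imports "HOL-Probability.Probability"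
begin

text \<open>For t with n*t an integer, nt is represented as the natural number nat (floor (n*t)).
  Natural-number powers are used so that 0^0 = 1.\<close>

definition P_X :: "nat \<Rightarrow> real \<Rightarrow> real \<Rightarrow> real" where
  "P_X n t \<phi> = (\<Sum>k\<in>{nat \<lceil>real n * t\<rceil>..n}. real (n choose k) * \<phi> ^ k * (1 - \<phi>) ^ (n - k))"

definition P_CH :: "nat \<Rightarrow> real \<Rightarrow> real \<Rightarrow> real" where
  "P_CH n t \<phi> = (if t \<ge> \<phi> then
     (let m = nat \<lfloor>real n * t\<rfloor> in (\<phi> / t) ^ m * ((1 - \<phi>) / (1 - t)) ^ (n - m))
   else 1)"

definition P_PBR :: "nat \<Rightarrow> real \<Rightarrow> real \<Rightarrow> real" where
  "P_PBR n t \<phi> = (let m = nat \<lfloor>real n * t\<rfloor> in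
     (if t \<ge> \<phi> then \<phi> ^ m * (1 - \<phi>) ^ (n - m) else t ^ m * (1 - t) ^ (n - m))
     * real (n + 1) * real (n choose m))"

definition normal_distribution :: "real \<Rightarrow> real \<Rightarrow> real measure" where
  "normal_distribution \<mu> v = density lborel (normal_density \<mu> (sqrt v))"

end

theory Submission
  imports Defs "HOL-Decision_Procs.Approximation_Bounds" "HOL-Real_Asymp.Real_Asymp"
begin

definition dS :: "nat \<Rightarrow> real" where
  "dS j = ln (fact j) - (real j + 1/2) * ln (real j) + real j"

lemma ln_taylor_bounds:
  fixes x :: real assumes "0 \<le> x" "x < 1"
  shows "x - x^2/2 \<le> ln (1 + x)" "ln (1 + x) \<le> x - x^2/2 + x^3/3"
proof -
  have "(\<Sum>i=0..<2*1. (- 1) ^ i * (1 / real (i + 1)) * x ^ (Suc i)) \<le> ln (x + 1)"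
    by (rule ln_bounds(1)[OF assms])
  then show "x - x^2/2 \<le> ln (1 + x)" by (simp add: numeral_eq_Suc power2_eq_square add.commute)
  have "ln (x + 1) \<le> (\<Sum>i=0..<2*1+1. (- 1) ^ i * (1 / real (i + 1)) * x ^ (Suc i))"
    by (rule ln_bounds(2)[OF assms])
  then show "ln (1 + x) \<le> x - x^2/2 + x^3/3"
    by (simp add: numeral_eq_Suc power2_eq_square add.commute power3_eq_cube)
qed

lemma dS_step:
  assumes "j \<ge> 1"
  shows "\<bar>dS j - dS (Suc j)\<bar> \<le> 1 / (real j)^2"
proof -
  have jp: "real j > 0" using assms by simp
  have f: "ln (fact (Suc j) :: real) = ln (real (Suc j)) + ln (fact j)"
    by (simp add: ln_mult del: of_nat_Suc)
  have l0: "1 + 1/real j = real (Suc j) / real j" using jp by (simp add: field_simps)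
  have l: "ln (real (Suc j)) = ln (real j) + ln (1 + 1/real j)"
    unfolding l0 using jp by (simp add: ln_div del: of_nat_Suc)
  have e: "dS j - dS (Suc j) = (real j + 1/2) * ln (1 + 1/real j) - 1"
    unfolding dS_def f l by (simp add: algebra_simps)
  show ?thesis
  proof (cases "j = 1")
    case True
    have "ln (2::real) < 1" by (rule ln_2_less_1)
    moreover have "ln (2::real) > 0" by simp
    ultimately have "\<bar>(real 1 + 1/2) * ln (1 + 1/real 1) - 1\<bar> \<le> 1 / (real 1)^2"
      by (simp add: abs_le_iff)
    then show ?thesis unfolding e using True by simp
  next
    case False
    then have j2: "real j \<ge> 2" using assms by simp
    define x where "x = 1 / real j"
    have x0: "0 \<le> x" "x < 1" using j2 by (auto simp: x_def)
    have A: "(real j + 1/2) * (x - x^2/2) \<le> (real j + 1/2) * ln (1 + x)"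
      using ln_taylor_bounds(1)[OF x0] jp by (intro mult_left_mono) auto
    have B: "(real j + 1/2) * ln (1 + x) \<le> (real j + 1/2) * (x - x^2/2 + x^3/3)"
      using ln_taylor_bounds(2)[OF x0] jp by (intro mult_left_mono) auto
    have A': "(real j + 1/2) * (x - x^2/2) - 1 = - 1 / (4 * (real j)^2)"
      using jp by (simp add: x_def field_simps power2_eq_square)
    have B': "(real j + 1/2) * (x - x^2/2 + x^3/3) - 1 = 1 / (12 * (real j)^2) + 1 / (6 * (real j)^3)"
      using jp by (simp add: x_def field_simps power2_eq_square power3_eq_cube)
    have C1: "1 / (12 * (real j)^2) + 1 / (6 * (real j)^3) \<le> 1 / (real j)^2"
      using j2 by (simp add: field_simps power2_eq_square power3_eq_cube)
    have C2: "1 / (4 * (real j)^2) \<le> 1 / (real j)^2"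
      using jp by (simp add: field_simps)
    show ?thesis unfolding e x_def[symmetric] using A B A' B' C1 C2 by linarith
  qed
qed

lemma dS_inc: assumes "j \<ge> 1" shows "dS j - 2 / real j \<le> dS (Suc j) - 2 / real (Suc j)"
proof -
  have jp: "real j \<ge> 1" using assms by simp
  have e2: "2 / real j - 2 / real (Suc j) = 2 / (real j * (real j + 1))"
    using jp by (simp add: field_simps)
  have "real j * (real j + 1) \<le> 2 * (real j)^2" using jp by (simp add: power2_eq_square algebra_simps)
  then have "1 / (real j)^2 \<le> 2 / (real j * (real j + 1))"
    using jp by (simp add: divide_simps)
  then have "1 / (real j)^2 \<le> 2 / real j - 2 / real (Suc j)" using e2 by simp
  then show ?thesis using dS_step[OF assms] by linarith
qed

lemma dS_dec: assumes "j \<ge> 1" shows "dS (Suc j) + 2 / real (Suc j) \<le> dS j + 2 / real j"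
proof -
  have jp: "real j \<ge> 1" using assms by simp
  have e2: "2 / real j - 2 / real (Suc j) = 2 / (real j * (real j + 1))"
    using jp by (simp add: field_simps)
  have "real j * (real j + 1) \<le> 2 * (real j)^2" using jp by (simp add: power2_eq_square algebra_simps)
  then have "1 / (real j)^2 \<le> 2 / (real j * (real j + 1))"
    using jp by (simp add: divide_simps)
  then have "1 / (real j)^2 \<le> 2 / real j - 2 / real (Suc j)" using e2 by simp
  then show ?thesis using dS_step[OF assms] by linarith
qed

lemma dS_limit: "\<exists>c. dS \<longlonglongrightarrow> c \<and> (\<forall>j\<ge>1. \<bar>dS j - c\<bar> \<le> 2 / real j)"
proof -
  define u where "u m = dS (Suc m) - 2 / real (Suc m)" for m
  define v where "v m = dS (Suc m) + 2 / real (Suc m)" for m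
  have iu: "incseq u" unfolding u_def
  proof (rule incseq_SucI)
    fix n show "dS (Suc n) - 2 / real (Suc n) \<le> dS (Suc (Suc n)) - 2 / real (Suc (Suc n))"
      using dS_inc[of "Suc n"] by simp
  qed
  have dv: "decseq v" unfolding v_def
  proof (rule decseq_SucI)
    fix n show "dS (Suc (Suc n)) + 2 / real (Suc (Suc n)) \<le> dS (Suc n) + 2 / real (Suc n)"
      using dS_dec[of "Suc n"] by simp
  qed
  have "u m \<le> v 0" for m
  proof -
    have "u m \<le> v m" by (simp add: u_def v_def)
    also have "\<dots> \<le> v 0" using dv by (simp add: decseq_def)
    finally show ?thesis .
  qed
  then obtain c where uc: "u \<longlonglongrightarrow> c" and ule: "\<And>i. u i \<le> c"
    using incseq_convergent[OF iu] by blast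
  have "(\<lambda>m. u m + 4 / real (Suc m)) \<longlonglongrightarrow> c + 0"
    by (intro tendsto_add uc) real_asymp
  moreover have "v = (\<lambda>m. u m + 4 / real (Suc m))" by (auto simp: u_def v_def fun_eq_iff)
  ultimately have vc: "v \<longlonglongrightarrow> c" by simp
  have vge: "c \<le> v i" for i by (rule decseq_ge[OF dv vc])
  have "(\<lambda>m. u m + 2 / real (Suc m)) \<longlonglongrightarrow> c + 0"
    by (intro tendsto_add uc) real_asymp
  then have "(\<lambda>m. dS (Suc m)) \<longlonglongrightarrow> c" by (simp add: u_def)
  then have "dS \<longlonglongrightarrow> c" by (rule LIMSEQ_imp_Suc)
  moreover have "\<bar>dS j - c\<bar> \<le> 2 / real j" if j1: "j \<ge> 1" for j
  proof -
    obtain m where m: "j = Suc m" using j1 by (cases j) auto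
    show ?thesis using ule[of m] vge[of m] unfolding m u_def v_def by linarith
  qed
  ultimately show ?thesis by blast
qed

lemma wallis_aux:
  fixes A F a :: real assumes "A > 0" "F > 0" "a \<ge> 0"
  shows "A^4/(F^2*(2*a+1)) * (4*(a+1)^2/((2*a+1)*(2*a+3))) = (2*A*(a+1))^4/(((2*a+2)*(2*a+1)*F)^2*(2*a+3))"
proof -
  have "A^4/(F^2*(2*a+1)) * (4*(a+1)^2/((2*a+1)*(2*a+3))) = (A^4*(4*(a+1)^2))/((F^2*(2*a+1))*((2*a+1)*(2*a+3)))" by simp
  also have "\<dots> = (2*A*(a+1))^4/(((2*a+2)*(2*a+1)*F)^2*(2*a+3))"
    using assms by (simp add: frac_eq_eq add_pos_pos) algebra
  finally show ?thesis .
qed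

lemma wallis_prod:
  "(\<Prod>k=1..n. 4*(real k)^2/(4*(real k)^2 - 1)) = (2^n * fact n)^4 / ((fact (2*n))^2 * (2*real n+1))"
proof (induction n)
  case 0 then show ?case by simp
next
  case (Suc n)
  have f2: "(fact (2 * Suc n) :: real) = (2*real n + 2) * (2*real n+1) * fact (2*n)"
    by (simp add: algebra_simps)
  have ff: "(fact (Suc n) :: real) = (real n + 1) * fact n" by simp
  have pos: "(fact n :: real) > 0" "(fact (2*n) :: real) > 0" by auto
  have e: "4 * (real (Suc n))^2 - 1 = (2*real n + 1) * (2 * real n + 3)"
    by (simp add: algebra_simps power2_eq_square)
  have "(\<Prod>k=1..Suc n. 4*(real k)^2/(4*(real k)^2 - 1))
     = (2^n * fact n)^4 / ((fact (2*n))^2 * (2*real n+1)) * (4*(real n+1)^2/((2*real n+1)*(2*real n+3)))"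
    unfolding prod.cl_ivl_Suc Suc.IH e[symmetric] by simp
  also have "\<dots> = (2*(2^n * fact n)*(real n+1))^4/(((2*real n+2)*(2*real n+1)*fact (2*n))^2*(2*real n+3))"
    by (rule wallis_aux) (use pos in auto)
  also have "\<dots> = (2^Suc n * fact (Suc n))^4 / ((fact (2*Suc n))^2 * (2*real (Suc n)+1))"
    unfolding f2 ff by (simp add: algebra_simps)
  finally show ?case .
qed

lemma dS_const: assumes "dS \<longlonglongrightarrow> c" shows "c = ln (sqrt (2*pi))"
proof -
  define W where "W n = (\<Prod>k=1..n. 4*(real k)^2/(4*(real k)^2 - 1))" for n
  have eq: "ln (W n) = - ln 2 + 4 * dS n - 2 * dS (2*n) + (ln (real n) - ln (2 * real n + 1))"
    if n1: "n \<ge> 1" for n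
  proof -
    have pos: "(fact n :: real) > 0" "(fact (2*n) :: real) > 0" "(2::real)^n > 0" by auto
    have "ln (W n) = 4 * (real n * ln 2 + ln (fact n)) - 2 * ln (fact (2*n)) - ln (2*real n+1)"
      unfolding W_def wallis_prod using pos
      by (simp add: ln_div ln_mult ln_realpow add_pos_pos)
    moreover have "ln (fact n) = dS n + (real n + 1/2) * ln (real n) - real n"
      by (simp add: dS_def)
    moreover have "ln (fact (2*n)) = dS (2*n) + (2*real n + 1/2) * (ln 2 + ln (real n)) - 2 * real n"
      using n1 by (simp add: dS_def ln_mult)
    ultimately show ?thesis by (simp add: algebra_simps)
  qed
  have "(\<lambda>n. ln (W n)) \<longlonglongrightarrow> ln (pi / 2)"
    unfolding W_def by (intro tendsto_ln wallis) simp
  moreover have "(\<lambda>n. - ln 2 + 4 * dS n - 2 * dS (2*n) + (ln (real n) - ln (2 * real n + 1)))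
      \<longlonglongrightarrow> - ln 2 + 4 * c - 2 * c + (- ln 2)"
  proof (intro tendsto_add tendsto_diff tendsto_mult tendsto_const assms)
    show "(\<lambda>n. dS (2*n)) \<longlonglongrightarrow> c"
      using LIMSEQ_subseq_LIMSEQ[OF assms, of "\<lambda>n. 2*n"] by (simp add: strict_mono_def o_def)
    show "(\<lambda>n. ln (real n) - ln (2 * real n + 1)) \<longlonglongrightarrow> - ln 2" by real_asymp
  qed
  then have "(\<lambda>n. ln (W n)) \<longlonglongrightarrow> - ln 2 + 4 * c - 2 * c + (- ln 2)"
    by (rule Lim_transform_eventually) (use eq in \<open>auto intro!: eventually_mono[OF eventually_ge_at_top[of 1]]\<close>)
  ultimately have "ln (pi/2) = - ln 2 + 4 * c - 2 * c + (- ln 2)" by (rule LIMSEQ_unique)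
  moreover have "ln (pi/2) = ln pi - ln 2" by (simp add: ln_div)
  ultimately have "2 * c = ln 2 + ln pi" by linarith
  then show ?thesis by (simp add: ln_sqrt ln_mult field_simps)
qed

lemma stirling_bound: "\<forall>j\<ge>1. \<bar>ln (fact j) - ((real j + 1/2) * ln (real j) - real j) - ln (sqrt (2*pi))\<bar> \<le> 2 / real j"
proof -
  obtain c where c: "dS \<longlonglongrightarrow> c" "\<forall>j\<ge>1. \<bar>dS j - c\<bar> \<le> 2 / real j" using dS_limit by blast
  have "c = ln (sqrt (2*pi))" by (rule dS_const[OF c(1)])
  then show ?thesis using c(2) by (simp add: dS_def algebra_simps)
qed

lemma ln_quad:
  fixes x :: real assumes "\<bar>x\<bar> \<le> 1/2"
  shows "\<bar>ln (1 + x) - x\<bar> \<le> 2 * x^2"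
proof (cases "x \<ge> 0")
  case True
  have "x - x^2 \<le> ln (1 + x)" by (rule ln_one_plus_pos_lower_bound) (use True assms in auto)
  moreover have "ln (1 + x) \<le> x" by (rule ln_add_one_self_le_self) (use True in auto)
  moreover have "0 \<le> x^2" by simp
  ultimately show ?thesis by (simp add: abs_le_iff)
next
  case False
  have "- (-x) - 2 * (-x)^2 \<le> ln (1 - (-x))" by (rule ln_one_minus_pos_lower_bound) (use False assms in auto)
  moreover have "ln (1 - (-x)) \<le> - (-x)" by (rule ln_one_minus_pos_upper_bound) (use False assms in auto)
  ultimately show ?thesis by (simp add: abs_le_iff)
qed

lemma binom_local:
  assumes "1 \<le> k" "k < n"
  shows "\<bar>ln (real (n choose k)) + real k * (ln (real k) - ln (real n))
      + real (n-k) * (ln (real (n-k)) - ln (real n)) + ln (2*pi)/2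
      + (ln (real n) + (ln (real k) - ln (real n)) + (ln (real (n-k)) - ln (real n)))/2\<bar>
    \<le> 2/real n + 2/real k + 2/real (n-k)"
proof -
  define m where "m = n - k"
  have m1: "m \<ge> 1" "n \<ge> 1" using assms by (auto simp: m_def)
  have nkm: "real n = real k + real m" using assms by (simp add: m_def)
  have C: "real (n choose k) = fact n / (fact k * fact m)"
    using assms by (simp add: binomial_fact m_def)
  have lnC: "ln (real (n choose k)) = ln (fact n) - ln (fact k) - ln (fact m)"
    unfolding C by (simp add: ln_div ln_mult)
  define s where "s = ln (sqrt (2*pi))"
  have s2: "ln (2*pi) = 2 * s" by (simp add: s_def ln_sqrt)
  define En where "En = ln (fact n) - ((real n + 1/2) * ln (real n) - real n) - s"
  have En: "ln (fact n) = (real n + 1/2) * ln (real n) - real n + s + En" "\<bar>En\<bar> \<le> 2/real n"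
    using stirling_bound m1(2) unfolding En_def s_def by auto
  define Ek where "Ek = ln (fact k) - ((real k + 1/2) * ln (real k) - real k) - s"
  have Ek: "ln (fact k) = (real k + 1/2) * ln (real k) - real k + s + Ek" "\<bar>Ek\<bar> \<le> 2/real k"
    using stirling_bound assms(1) unfolding Ek_def s_def by auto
  define Em where "Em = ln (fact m) - ((real m + 1/2) * ln (real m) - real m) - s"
  have Em: "ln (fact m) = (real m + 1/2) * ln (real m) - real m + s + Em" "\<bar>Em\<bar> \<le> 2/real m"
    using stirling_bound m1(1) unfolding Em_def s_def by auto
  have nl: "real n * ln (real n) = real k * ln (real n) + real m * ln (real n)"
    using nkm by (simp add: algebra_simps)
  have "ln (real (n choose k)) + real k * (ln (real k) - ln (real n))
      + real m * (ln (real m) - ln (real n)) + ln (2*pi)/2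
      + (ln (real n) + (ln (real k) - ln (real n)) + (ln (real m) - ln (real n)))/2 = En - Ek - Em" (is "?L = _")
    unfolding lnC En(1) Ek(1) Em(1) s2 using nkm nl by (simp add: algebra_simps add_divide_distrib diff_divide_distrib)
  then have "\<bar>?L\<bar> \<le> 2/real n + 2/real k + 2/real m" using En(2) Ek(2) Em(2) by linarith
  then show ?thesis unfolding m_def .
qed

definition bterm :: "nat \<Rightarrow> real \<Rightarrow> nat \<Rightarrow> real" where
  "bterm n \<phi> j = real (n choose j) * \<phi> ^ j * (1 - \<phi>) ^ (n - j)"

lemma bterm_ratio:
  assumes "j < n"
  shows "bterm n \<phi> (Suc j) * (real (Suc j) * (1 - \<phi>)) = bterm n \<phi> j * (real (n - j) * \<phi>)"
proof -
  obtain n' where n': "n = Suc n'" using assms by (cases n) auto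
  have "Suc j * (n choose Suc j) = (n - j) * (n choose j)"
    unfolding n' Suc_times_binomial using binomial_absorb_comp[of "Suc n'" j] by simp
  then have b: "real (Suc j) * real (n choose Suc j) = real (n - j) * real (n choose j)"
    by (metis of_nat_mult)
  have p: "(1 - \<phi>) ^ (n - j) = (1 - \<phi>) * (1 - \<phi>) ^ (n - Suc j)"
    using assms by (metis Suc_diff_Suc power_Suc)
  have "bterm n \<phi> (Suc j) * (real (Suc j) * (1 - \<phi>)) = (real (Suc j) * real (n choose Suc j)) * (\<phi> * \<phi> ^ j * (1 - \<phi>) ^ (n - Suc j) * (1-\<phi>))"
    unfolding bterm_def power_Suc by (simp only: mult_ac)
  also have "\<dots> = (real (n - j) * real (n choose j)) * (\<phi> * \<phi> ^ j * (1 - \<phi>) ^ (n - Suc j) * (1-\<phi>))"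
    by (simp only: b)
  also have "\<dots> = bterm n \<phi> j * (real (n - j) * \<phi>)"
    unfolding bterm_def p by (simp only: mult_ac)
  finally show ?thesis .
qed

lemma bterm_nonneg: "0 \<le> \<phi> \<Longrightarrow> \<phi> \<le> 1 \<Longrightarrow> 0 \<le> bterm n \<phi> j"
  unfolding bterm_def by simp

lemma bterm_pos: "0 < \<phi> \<Longrightarrow> \<phi> < 1 \<Longrightarrow> j \<le> n \<Longrightarrow> 0 < bterm n \<phi> j"
  unfolding bterm_def by simp

lemma bterm_Suc_eq:
  assumes "j < n" "0 < \<phi>" "\<phi> < 1"
  shows "bterm n \<phi> (Suc j) = bterm n \<phi> j * ((real (n - j) * \<phi>) / (real (Suc j) * (1 - \<phi>)))"
  using bterm_ratio[OF assms(1), of \<phi>] assms(2,3)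
  by (simp add: field_simps del: of_nat_Suc)

lemma geo_sum_le:
  fixes \<rho> :: real assumes "0 \<le> \<rho>" "\<rho> < 1"
  shows "(\<Sum>i\<in>{0..M}. \<rho>^i) = (1 - \<rho>^Suc M) / (1 - \<rho>)"
proof -
  have "{0..M} = {..<Suc M}" by auto
  then show ?thesis using sum_gp_strict[of \<rho> "Suc M"] assms by simp
qed

lemma tail_upper:
  assumes phi: "0 < \<phi>" "\<phi> < 1" and k: "1 \<le> k" "k \<le> n"
    and rho: "\<rho> = real (n-k) / real k * (\<phi> / (1 - \<phi>))" "\<rho> < 1"
  shows "(\<Sum>j\<in>{k..n}. bterm n \<phi> j) \<le> bterm n \<phi> k / (1 - \<rho>)"
proof -
  have r0: "0 \<le> \<rho>" unfolding rho(1) using phi k by simp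
  have step: "bterm n \<phi> (k+i) \<le> bterm n \<phi> k * \<rho>^i" if "k + i \<le> n" for i
    using that
  proof (induction i)
    case 0 then show ?case by simp
  next
    case (Suc i)
    define j where "j = k + i"
    have jn: "j < n" using Suc.prems by (simp add: j_def)
    have rj: "(real (n - j) * \<phi>) / (real (Suc j) * (1 - \<phi>)) \<le> \<rho>"
    proof -
      have "real (n - j) * real k \<le> real (n - k) * real (Suc j)"
        using jn k unfolding j_def of_nat_mult[symmetric] of_nat_le_iff
        by (intro mult_mono) auto
      then have "real (n - j) / real (Suc j) \<le> real (n-k) / real k"
        using k by (simp add: divide_simps)
      then have "real (n - j) / real (Suc j) * (\<phi> / (1 - \<phi>)) \<le> real (n-k) / real k * (\<phi> / (1 - \<phi>))"
        using phi by (intro mult_right_mono) auto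
      then show ?thesis unfolding rho(1) by (simp add: field_simps)
    qed
    have "bterm n \<phi> (k + Suc i) = bterm n \<phi> j * ((real (n - j) * \<phi>) / (real (Suc j) * (1 - \<phi>)))"
      using bterm_Suc_eq[OF jn phi] by (simp add: j_def)
    also have "\<dots> \<le> bterm n \<phi> j * \<rho>"
      using rj bterm_nonneg[of \<phi> n j] phi by (intro mult_left_mono) auto
    also have "\<dots> \<le> bterm n \<phi> k * \<rho>^i * \<rho>"
      using Suc r0 by (intro mult_right_mono) (auto simp: j_def)
    finally show ?case by (simp add: mult_ac)
  qed
  have "(\<Sum>j\<in>{k..n}. bterm n \<phi> j) = (\<Sum>i\<in>{0..n-k}. bterm n \<phi> (k+i))"
    using sum.atLeastAtMost_shift_0[OF k(2)] by (simp add: o_def)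
  also have "\<dots> \<le> (\<Sum>i\<in>{0..n-k}. bterm n \<phi> k * \<rho>^i)"
    by (intro sum_mono step) (use k in auto)
  also have "\<dots> = bterm n \<phi> k * ((1 - \<rho>^Suc (n-k)) / (1 - \<rho>))"
    by (simp add: sum_distrib_left[symmetric] geo_sum_le r0 rho(2))
  also have "\<dots> \<le> bterm n \<phi> k * (1 / (1 - \<rho>))"
    using r0 rho(2) bterm_nonneg[of \<phi> n k] phi
    by (intro mult_left_mono divide_right_mono) auto
  finally show ?thesis by simp
qed

lemma tail_lower:
  assumes phi: "0 < \<phi>" "\<phi> < 1" and k: "1 \<le> k" "k < n" "k + N \<le> n"
    and rho: "\<rho> = real (n-k) / real k * (\<phi> / (1 - \<phi>))" "\<rho> < 1"
    and eps: "\<epsilon> = real N * real n / (real k * real (n - k))" "\<epsilon> \<le> 1"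
  shows "bterm n \<phi> k * ((1 - \<rho>^Suc N) / (1 - \<rho> * (1 - \<epsilon>))) \<le> (\<Sum>j\<in>{k..n}. bterm n \<phi> j)"
proof -
  define q where "q = \<rho> * (1 - \<epsilon>)"
  have r0: "0 \<le> \<rho>" unfolding rho(1) using phi k by simp
  have e0: "0 \<le> \<epsilon>" unfolding eps(1) using k by simp
  have q1: "q \<le> \<rho>" unfolding q_def using r0 e0 by (intro mult_left_le) auto
  have q0: "0 \<le> q" "q \<le> \<rho>" "q < 1" using r0 e0 eps(2) rho(2) q1 unfolding q_def
    by auto
  define a where "a = real k"
  define b where "b = real (n - k)"
  have ab: "a > 0" "b > 0" "real n = a + b" using k by (auto simp: a_def b_def)
  have step: "bterm n \<phi> k * q^i \<le> bterm n \<phi> (k+i)" if "i \<le> N" for i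
    using that
  proof (induction i)
    case 0 then show ?case by simp
  next
    case (Suc l)
    define j where "j = k + l"
    have jn: "j < n" using Suc.prems k by (simp add: j_def)
    have lN: "real l + 1 \<le> real N" using Suc.prems by simp
    have rj: "q \<le> (real (n - j) * \<phi>) / (real (Suc j) * (1 - \<phi>))"
    proof -
      have nj: "real (n - j) = b - real l" "real (Suc j) = a + real l + 1"
        using jn by (auto simp: a_def b_def j_def of_nat_diff)
      have r1: "\<epsilon> * b * a \<le> \<epsilon> * b * (a + real l + 1)"
        using e0 ab by (intro mult_left_mono) auto
      have r2: "\<epsilon> * b * a = real N * (a + b)"
        unfolding eps(1) using ab by (simp add: a_def b_def field_simps)
      have r3: "b * (real l + 1) \<le> b * real N" "real l * a \<le> real N * a"
        using lN ab by (auto intro: mult_left_mono mult_right_mono)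
      have "b * (1 - \<epsilon>) * (a + real l + 1) \<le> (b - real l) * a"
        using r1 r2 r3 by (simp add: algebra_simps)
      then have "b * (1 - \<epsilon>) / a \<le> (b - real l) / (a + real l + 1)"
        using ab by (simp add: divide_simps)
      then have "b * (1 - \<epsilon>) / a * (\<phi> / (1 - \<phi>)) \<le> (b - real l) / (a + real l + 1) * (\<phi> / (1 - \<phi>))"
        using phi by (intro mult_right_mono) auto
      then show ?thesis unfolding q_def rho(1) nj a_def[symmetric] b_def[symmetric]
        by (simp add: field_simps)
    qed
    have "bterm n \<phi> k * q^Suc l = bterm n \<phi> k * q^l * q" by simp
    also have "\<dots> \<le> bterm n \<phi> j * q"
      using Suc q0 by (intro mult_right_mono) (auto simp: j_def)
    also have "\<dots> \<le> bterm n \<phi> j * ((real (n - j) * \<phi>) / (real (Suc j) * (1 - \<phi>)))"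
      using rj bterm_nonneg[of \<phi> n j] phi by (intro mult_left_mono) auto
    also have "\<dots> = bterm n \<phi> (k + Suc l)"
      using bterm_Suc_eq[OF jn phi] by (simp add: j_def)
    finally show ?case .
  qed
  have "bterm n \<phi> k * ((1 - \<rho>^Suc N) / (1 - q)) \<le> bterm n \<phi> k * ((1 - q^Suc N) / (1 - q))"
    using q0 bterm_nonneg[of \<phi> n k] phi power_mono[of q \<rho> "Suc N"]
    by (intro mult_left_mono divide_right_mono) auto
  also have "\<dots> = (\<Sum>i\<in>{0..N}. bterm n \<phi> k * q^i)"
    by (simp add: sum_distrib_left[symmetric] geo_sum_le q0)
  also have "\<dots> \<le> (\<Sum>i\<in>{0..N}. bterm n \<phi> (k+i))"
    by (intro sum_mono step) auto
  also have "\<dots> = (\<Sum>j\<in>{k..k+N}. bterm n \<phi> j)"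
    using sum.atLeastAtMost_shift_0[of k "k+N" "bterm n \<phi>"] by (simp add: o_def)
  also have "\<dots> \<le> (\<Sum>j\<in>{k..n}. bterm n \<phi> j)"
    using k phi by (intro sum_mono2) (auto intro: bterm_nonneg)
  finally show ?thesis unfolding q_def .
qed

lemma tail_log:
  assumes phi: "0 < \<phi>" "\<phi> < 1" and k: "1 \<le> k" "k < n" "k + N \<le> n"
    and rho: "\<rho> = real (n-k) / real k * (\<phi> / (1 - \<phi>))" "\<rho> < 1"
    and eps: "\<epsilon> = real N * real n / (real k * real (n - k))" "\<epsilon> \<le> 1"
    and rs: "\<rho>^Suc N \<le> 1/2"
  shows "\<bar>ln (\<Sum>j\<in>{k..n}. bterm n \<phi> j) - ln (bterm n \<phi> k) + ln (1 - \<rho>)\<bar> \<le> \<epsilon> / (1 - \<rho>) + 2 * \<rho>^Suc N"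
proof -
  define S where "S = (\<Sum>j\<in>{k..n}. bterm n \<phi> j)"
  define T where "T = bterm n \<phi> k"
  define x where "x = \<rho>^Suc N"
  define q where "q = \<rho> * (1 - \<epsilon>)"
  have r0: "0 \<le> \<rho>" unfolding rho(1) using phi k by simp
  have e0: "0 \<le> \<epsilon>" unfolding eps(1) using k by simp
  have q1: "q \<le> \<rho>" unfolding q_def using r0 e0 by (intro mult_left_le) auto
  have q0: "0 \<le> q" "q < 1" using r0 e0 eps(2) rho(2) q1 unfolding q_def by auto
  have T0: "T > 0" unfolding T_def using bterm_pos phi k by auto
  have x0: "0 \<le> x" "x \<le> 1/2" using rs r0 by (auto simp: x_def)
  have up: "S \<le> T / (1 - \<rho>)" unfolding S_def T_def using tail_upper[OF phi k(1) _ rho] k by auto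
  have low: "T * ((1 - x) / (1 - q)) \<le> S" unfolding S_def T_def x_def q_def
    by (rule tail_lower[OF phi k rho eps])
  have lp: "T * ((1 - x) / (1 - q)) > 0" using T0 x0 q0 by auto
  then have S0: "S > 0" using low by linarith
  have u: "ln S \<le> ln T - ln (1 - \<rho>)"
  proof -
    have "ln S \<le> ln (T / (1 - \<rho>))" using up S0 by simp
    also have "\<dots> = ln T - ln (1 - \<rho>)" using T0 rho(2) by (simp add: ln_div)
    finally show ?thesis .
  qed
  have l1: "ln T + ln (1 - x) - ln (1 - q) \<le> ln S"
  proof -
    have "ln (T * ((1 - x) / (1 - q))) \<le> ln S" using low lp by simp
    moreover have "ln (T * ((1 - x) / (1 - q))) = ln T + ln (1 - x) - ln (1 - q)"
      using T0 x0 q0 by (simp add: ln_mult ln_div)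
    ultimately show ?thesis by simp
  qed
  have l2: "ln (1 - q) \<le> ln (1 - \<rho>) + \<epsilon> / (1 - \<rho>)"
  proof -
    define y where "y = \<rho> * \<epsilon> / (1 - \<rho>)"
    have y0: "0 \<le> y" unfolding y_def using r0 e0 rho(2) by simp
    have "1 - q = (1 - \<rho>) * (1 + y)" unfolding y_def q_def using rho(2) by (simp add: field_simps)
    then have "ln (1 - q) = ln (1 - \<rho>) + ln (1 + y)" using rho(2) y0 by (simp add: ln_mult)
    moreover have "ln (1 + y) \<le> y" using y0 by (rule ln_add_one_self_le_self)
    moreover have "y \<le> \<epsilon> / (1 - \<rho>)" unfolding y_def
      by (intro divide_right_mono mult_left_le_one_le) (use r0 e0 rho(2) in auto)
    ultimately show ?thesis by linarith
  qed
  have l3: "- 2 * x \<le> ln (1 - x)"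
  proof -
    have "- x - 2 * x^2 \<le> ln (1 - x)" using x0 by (rule ln_one_minus_pos_lower_bound)
    moreover have "x * (2 * x) \<le> x * 1" using x0 by (intro mult_left_mono) auto
    then have "x^2 \<le> x / 2" by (simp add: power2_eq_square)
    ultimately show ?thesis by linarith
  qed
  show ?thesis using u l1 l2 l3 unfolding S_def[symmetric] T_def[symmetric] x_def[symmetric]
    by (simp add: abs_le_iff)
qed

lemma nat_floor_k: "n > 0 \<Longrightarrow> nat \<lfloor>real n * (real k / real n)\<rfloor> = k"
  by simp

lemma nat_ceil_k: "n > 0 \<Longrightarrow> nat \<lceil>real n * (real k / real n)\<rceil> = k"
  by simp

lemma arith1:
  fixes r1 r2 w E a b c e :: real
  assumes "\<bar>r1\<bar> \<le> 2*a" "\<bar>r2\<bar> \<le> 2*b" "0 \<le> w" "w \<le> c" "\<bar>E\<bar> \<le> e"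
  shows "\<bar>r1/2 + r2/2 - w - E\<bar> \<le> a + b + (c + e)"
  using assms by linarith

lemma part1_core:
  fixes \<phi> \<theta> :: real and n k :: nat
  assumes ph: "0 < \<phi>" "\<phi> < \<theta>" "\<theta> < 1" and k: "1 \<le> k" "k < n"
    and t: "t = real k / real n" "\<phi> \<le> t" "\<bar>t - \<theta>\<bar> \<le> \<theta>/2" "\<bar>t - \<theta>\<bar> \<le> (1-\<theta>)/2"
  shows "\<bar>- sqrt (real n) * ln (sqrt (2 * pi * \<theta> * (1 - \<theta>)) * P_PBR n t \<phi> / (sqrt (real n) * P_CH n t \<phi>))
           + sqrt (real n) * (- (1/\<theta> - 1/(1-\<theta>))/2) * (t - \<theta>)\<bar>
         \<le> (1/\<theta>^2 + 1/(1-\<theta>)^2) * sqrt (real n) * (t - \<theta>)^2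
           + sqrt (real n) * (1 / real n + (2/real n + 2/real k + 2/real (n-k)))"
proof -
  have n0: "n > 0" "real n > 0" using k by auto
  have th: "0 < \<theta>" "\<theta> < 1" using ph by auto
  have m: "nat \<lfloor>real n * t\<rfloor> = k" using n0 t(1) by simp
  have tp: "0 < t" "t < 1" using t(1) k n0 by auto
  have nk: "real (n - k) > 0" using k by simp
  have Cp: "real (n choose k) > 0" using k by simp
  have omt: "1 - t = real (n - k) / real n" using t(1) k n0 by (simp add: field_simps of_nat_diff)
  have lt: "ln t = ln (real k) - ln (real n)" using t(1) k n0 by (simp add: ln_div)
  have l1t: "ln (1 - t) = ln (real (n - k)) - ln (real n)" using omt nk n0 by (simp add: ln_div)
  have PB: "P_PBR n t \<phi> = \<phi> ^ k * (1 - \<phi>) ^ (n - k) * real (n + 1) * real (n choose k)"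
    unfolding P_PBR_def Let_def m using t(2) by simp
  have PC: "P_CH n t \<phi> = (\<phi> / t) ^ k * ((1 - \<phi>) / (1 - t)) ^ (n - k)"
    unfolding P_CH_def Let_def m using t(2) by simp
  have lPB: "ln (P_PBR n t \<phi>) = real k * ln \<phi> + real (n-k) * ln (1 - \<phi>) + ln (real n + 1) + ln (real (n choose k))"
    unfolding PB using ph Cp by (simp add: ln_mult ln_realpow add_pos_pos)
  have lPC: "ln (P_CH n t \<phi>) = real k * (ln \<phi> - ln t) + real (n-k) * (ln (1 - \<phi>) - ln (1 - t))"
    unfolding PC using ph tp by (simp add: ln_mult ln_realpow ln_div)
  have PBp: "P_PBR n t \<phi> > 0" unfolding PB using ph Cp by simp
  have PCp: "P_CH n t \<phi> > 0" unfolding PC using ph tp by simp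
  have lsq: "ln (sqrt (2 * pi * \<theta> * (1 - \<theta>))) = (ln (2*pi) + ln \<theta> + ln (1 - \<theta>)) / 2"
    using th by (simp add: ln_sqrt ln_mult)
  have lsn: "ln (sqrt (real n)) = ln (real n) / 2" using n0 by (simp add: ln_sqrt)
  define L where "L = ln (sqrt (2 * pi * \<theta> * (1 - \<theta>)) * P_PBR n t \<phi> / (sqrt (real n) * P_CH n t \<phi>))"
  have L1: "L = ln (sqrt (2 * pi * \<theta> * (1 - \<theta>))) + ln (P_PBR n t \<phi>) - (ln (sqrt (real n)) + ln (P_CH n t \<phi>))"
    unfolding L_def using th PBp PCp n0 by (simp add: ln_div ln_mult)
  define E where "E = ln (real (n choose k)) + real k * (ln (real k) - ln (real n))
      + real (n-k) * (ln (real (n-k)) - ln (real n)) + ln (2*pi)/2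
      + (ln (real n) + (ln (real k) - ln (real n)) + (ln (real (n-k)) - ln (real n)))/2"
  have Eb: "\<bar>E\<bar> \<le> 2/real n + 2/real k + 2/real (n-k)" unfolding E_def by (rule binom_local[OF k])
  define x1 where "x1 = (t - \<theta>) / \<theta>"
  define x2 where "x2 = (\<theta> - t) / (1 - \<theta>)"
  have x1b: "\<bar>x1\<bar> \<le> 1/2" using t(3) th by (simp add: x1_def abs_divide divide_le_eq)
  have x2b: "\<bar>x2\<bar> \<le> 1/2" using t(4) th by (simp add: x2_def abs_divide divide_le_eq abs_minus_commute)
  have lx1: "ln t - ln \<theta> = ln (1 + x1)"
  proof -
    have "1 + x1 = t / \<theta>" using th by (simp add: x1_def field_simps)
    then show ?thesis using th tp by (simp add: ln_div)
  qed
  have lx2: "ln (1 - t) - ln (1 - \<theta>) = ln (1 + x2)"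
  proof -
    have "1 + x2 = (1 - t) / (1 - \<theta>)" using th by (simp add: x2_def field_simps)
    then show ?thesis using th tp by (simp add: ln_div)
  qed
  define w where "w = ln (real n + 1) - ln (real n)"
  have w: "0 \<le> w" "w \<le> 1 / real n"
  proof -
    have "real n + 1 = real n * (1 + 1 / real n)" using n0 by (simp add: field_simps)
    moreover have "1 + 1 / real n > 0" using n0 by (simp add: add_pos_pos)
    ultimately have "w = ln (1 + 1 / real n)" unfolding w_def using n0 by (simp add: ln_mult)
    then show "0 \<le> w" "w \<le> 1 / real n" using n0 by (auto intro: ln_add_one_self_le_self)
  qed
  have Lform: "L = - (ln (1 + x1) + ln (1 + x2)) / 2 + w + E"
    unfolding L1 lPB lPC lsq lsn E_def w_def lx1[symmetric] lx2[symmetric] lt l1t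
    by (simp add: algebra_simps add_divide_distrib diff_divide_distrib)
  have lin: "(- (1/\<theta> - 1/(1-\<theta>))/2) * (t - \<theta>) = - (x1 + x2) / 2"
    using th by (simp add: x1_def x2_def field_simps)
  have q1: "\<bar>ln (1 + x1) - x1\<bar> \<le> 2 * x1^2" by (rule ln_quad[OF x1b])
  have q2: "\<bar>ln (1 + x2) - x2\<bar> \<le> 2 * x2^2" by (rule ln_quad[OF x2b])
  have sq: "x1^2 + x2^2 = (1/\<theta>^2 + 1/(1-\<theta>)^2) * (t - \<theta>)^2"
    using th by (simp add: x1_def x2_def field_simps power2_eq_square)
  have main: "- sqrt (real n) * L + sqrt (real n) * (- (1/\<theta> - 1/(1-\<theta>))/2) * (t - \<theta>)
      = sqrt (real n) * ((ln (1 + x1) - x1) / 2 + (ln (1 + x2) - x2) / 2 - w - E)"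
    unfolding Lform mult.assoc lin by (simp add: algebra_simps add_divide_distrib diff_divide_distrib)
  have "\<bar>(ln (1 + x1) - x1) / 2 + (ln (1 + x2) - x2) / 2 - w - E\<bar> \<le> x1^2 + x2^2 + (1/real n + (2/real n + 2/real k + 2/real (n-k)))"
    by (rule arith1[OF q1 q2 w Eb])
  then have "\<bar>sqrt (real n) * ((ln (1 + x1) - x1) / 2 + (ln (1 + x2) - x2) / 2 - w - E)\<bar>
     \<le> sqrt (real n) * (x1^2 + x2^2 + (1/real n + (2/real n + 2/real k + 2/real (n-k))))"
    by (simp add: abs_mult mult_left_mono)
  then show ?thesis unfolding L_def[symmetric] main sq by (simp add: algebra_simps)
qed

lemma arith2:
  fixes r1 r2 r3 E G a b c e g :: real
  assumes "\<bar>r1\<bar> \<le> 2*a" "\<bar>r2\<bar> \<le> 2*b" "\<bar>r3\<bar> \<le> 2*c" "\<bar>E\<bar> \<le> e" "\<bar>G\<bar> \<le> g"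
  shows "\<bar>r3 - r1/2 + r2/2 - E - G\<bar> \<le> 2*c + a + b + (e + g)"
  using assms by linarith

lemma part2_core:
  fixes \<phi> \<theta> :: real and n k N :: nat
  assumes ph: "0 < \<phi>" "\<phi> < \<theta>" "\<theta> < 1" and k: "1 \<le> k" "k < n" "k + N \<le> n"
    and t: "t = real k / real n" "\<phi> < t" "\<bar>t - \<theta>\<bar> \<le> \<theta>/2" "\<bar>t - \<theta>\<bar> \<le> (1-\<theta>)/2"
       "\<bar>t - \<theta>\<bar> \<le> (\<theta> - \<phi>)/2"
    and rho: "\<rho> = real (n-k) / real k * (\<phi> / (1 - \<phi>))" "\<rho> < 1"
    and eps: "\<epsilon> = real N * real n / (real k * real (n - k))" "\<epsilon> \<le> 1"
    and rs: "\<rho>^Suc N \<le> 1/2"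
  shows "\<bar>- sqrt (real n) * ln ((\<theta> - \<phi>) / (1 - \<phi>) * sqrt (2 * pi * (1 - \<theta>) / \<theta>)
                    * (sqrt (real n) * P_X n t \<phi>) / P_CH n t \<phi>)
           + sqrt (real n) * (- (1/(\<theta>-\<phi>) - 1/(2*\<theta>) - 1/(2*(1-\<theta>)))) * (t - \<theta>)\<bar>
         \<le> (2/(\<theta>-\<phi>)^2 + 1/\<theta>^2 + 1/(1-\<theta>)^2) * sqrt (real n) * (t - \<theta>)^2
           + sqrt (real n) * ((2/real n + 2/real k + 2/real (n-k)) + (\<epsilon> / (1 - \<rho>) + 2 * \<rho>^Suc N))"
proof -
  have n0: "n > 0" "real n > 0" using k by auto
  have th: "0 < \<theta>" "\<theta> < 1" "0 < \<theta> - \<phi>" "\<phi> < 1" using ph by auto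
  have m: "nat \<lfloor>real n * t\<rfloor> = k" using n0 t(1) by simp
  have mc: "nat \<lceil>real n * t\<rceil> = k" using n0 t(1) by simp
  have tp: "0 < t" "t < 1" using t(1) k n0 by auto
  have nk: "real (n - k) > 0" using k by simp
  have Cp: "real (n choose k) > 0" using k by simp
  have omt: "1 - t = real (n - k) / real n" using t(1) k n0 by (simp add: field_simps of_nat_diff)
  have lt: "ln t = ln (real k) - ln (real n)" using t(1) k n0 by (simp add: ln_div)
  have l1t: "ln (1 - t) = ln (real (n - k)) - ln (real n)" using omt nk n0 by (simp add: ln_div)
  have PX: "P_X n t \<phi> = (\<Sum>j\<in>{k..n}. bterm n \<phi> j)"
    unfolding P_X_def mc bterm_def by simp
  have PC: "P_CH n t \<phi> = (\<phi> / t) ^ k * ((1 - \<phi>) / (1 - t)) ^ (n - k)"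
    unfolding P_CH_def Let_def m using t(2) by simp
  have PXp: "P_X n t \<phi> > 0"
  proof -
    have "bterm n \<phi> k \<le> (\<Sum>j\<in>{k..n}. bterm n \<phi> j)"
      by (rule member_le_sum) (use k ph in \<open>auto intro: bterm_nonneg\<close>)
    moreover have "bterm n \<phi> k > 0" using ph k by (intro bterm_pos) auto
    ultimately show ?thesis unfolding PX by linarith
  qed
  have PCp: "P_CH n t \<phi> > 0" unfolding PC using ph tp by simp
  define G where "G = ln (P_X n t \<phi>) - ln (bterm n \<phi> k) + ln (1 - \<rho>)"
  have Gb: "\<bar>G\<bar> \<le> \<epsilon> / (1 - \<rho>) + 2 * \<rho>^Suc N"
    unfolding G_def PX by (rule tail_log[OF ph(1) th(4) k rho eps rs])
  have lT: "ln (bterm n \<phi> k) = ln (real (n choose k)) + real k * ln \<phi> + real (n-k) * ln (1 - \<phi>)"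
    unfolding bterm_def using ph Cp th by (simp add: ln_mult ln_realpow)
  have rt: "real (n-k) / real k = (1 - t) / t"
  proof -
    have "(1 - t) / t = (real (n - k) / real n) / (real k / real n)" using omt t(1) by simp
    also have "\<dots> = real (n-k) / real k" using n0 by simp
    finally show ?thesis by simp
  qed
  have omr: "1 - \<rho> = (t - \<phi>) / (t * (1 - \<phi>))"
    unfolding rho(1) rt using tp th by (simp add: field_simps)
  have lomr: "ln (1 - \<rho>) = ln (t - \<phi>) - ln t - ln (1 - \<phi>)"
    unfolding omr using tp th t(2) by (simp add: ln_div ln_mult)
  have lPC: "ln (P_CH n t \<phi>) = real k * (ln \<phi> - ln t) + real (n-k) * (ln (1 - \<phi>) - ln (1 - t))"
    unfolding PC using ph tp by (simp add: ln_mult ln_realpow ln_div)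
  have lsq: "ln (sqrt (2 * pi * (1 - \<theta>) / \<theta>)) = (ln (2*pi) + ln (1 - \<theta>) - ln \<theta>) / 2"
    using th by (simp add: ln_sqrt ln_mult ln_div)
  have lsn: "ln (sqrt (real n)) = ln (real n) / 2" using n0 by (simp add: ln_sqrt)
  have lq: "ln ((\<theta> - \<phi>) / (1 - \<phi>)) = ln (\<theta> - \<phi>) - ln (1 - \<phi>)" using th by (simp add: ln_div)
  define L where "L = ln ((\<theta> - \<phi>) / (1 - \<phi>) * sqrt (2 * pi * (1 - \<theta>) / \<theta>)
                    * (sqrt (real n) * P_X n t \<phi>) / P_CH n t \<phi>)"
  have L1: "L = ln ((\<theta> - \<phi>) / (1 - \<phi>)) + ln (sqrt (2 * pi * (1 - \<theta>) / \<theta>))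
      + (ln (sqrt (real n)) + ln (P_X n t \<phi>)) - ln (P_CH n t \<phi>)"
    unfolding L_def using th PXp PCp n0 by (simp add: ln_div ln_mult)
  have lPX: "ln (P_X n t \<phi>) = G + ln (bterm n \<phi> k) - ln (1 - \<rho>)" unfolding G_def by simp
  define E where "E = ln (real (n choose k)) + real k * (ln (real k) - ln (real n))
      + real (n-k) * (ln (real (n-k)) - ln (real n)) + ln (2*pi)/2
      + (ln (real n) + (ln (real k) - ln (real n)) + (ln (real (n-k)) - ln (real n)))/2"
  have Eb: "\<bar>E\<bar> \<le> 2/real n + 2/real k + 2/real (n-k)" unfolding E_def by (rule binom_local[OF k(1,2)])
  define x1 where "x1 = (t - \<theta>) / \<theta>"
  define x2 where "x2 = (\<theta> - t) / (1 - \<theta>)"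
  define x3 where "x3 = (t - \<theta>) / (\<theta> - \<phi>)"
  have x1b: "\<bar>x1\<bar> \<le> 1/2" using t(3) th by (simp add: x1_def abs_divide divide_le_eq)
  have x2b: "\<bar>x2\<bar> \<le> 1/2" using t(4) th by (simp add: x2_def abs_divide divide_le_eq abs_minus_commute)
  have x3b: "\<bar>x3\<bar> \<le> 1/2" using t(5) th by (simp add: x3_def abs_divide divide_le_eq)
  have lx1: "ln t - ln \<theta> = ln (1 + x1)"
  proof -
    have "1 + x1 = t / \<theta>" using th by (simp add: x1_def field_simps)
    then show ?thesis using th tp by (simp add: ln_div)
  qed
  have lx2: "ln (1 - t) - ln (1 - \<theta>) = ln (1 + x2)"
  proof -
    have "1 + x2 = (1 - t) / (1 - \<theta>)" using th by (simp add: x2_def field_simps)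
    then show ?thesis using th tp by (simp add: ln_div)
  qed
  have lx3: "ln (t - \<phi>) - ln (\<theta> - \<phi>) = ln (1 + x3)"
  proof -
    have "1 + x3 = (t - \<phi>) / (\<theta> - \<phi>)" using th by (simp add: x3_def field_simps)
    then show ?thesis using th tp t(2) by (simp add: ln_div)
  qed
  have Lform: "L = - ln (1 + x3) + ln (1 + x1) / 2 - ln (1 + x2) / 2 + E + G"
    unfolding L1 lPX lT lomr lPC lsq lsn lq E_def lx1[symmetric] lx2[symmetric] lx3[symmetric] lt l1t
    by (simp add: algebra_simps add_divide_distrib diff_divide_distrib)
  have lin: "(- (1/(\<theta>-\<phi>) - 1/(2*\<theta>) - 1/(2*(1-\<theta>)))) * (t - \<theta>) = - (x3 - x1/2 + x2/2)"
    using th by (simp add: x1_def x2_def x3_def field_simps)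
  have q1: "\<bar>ln (1 + x1) - x1\<bar> \<le> 2 * x1^2" by (rule ln_quad[OF x1b])
  have q2: "\<bar>ln (1 + x2) - x2\<bar> \<le> 2 * x2^2" by (rule ln_quad[OF x2b])
  have q3: "\<bar>ln (1 + x3) - x3\<bar> \<le> 2 * x3^2" by (rule ln_quad[OF x3b])
  have sq: "2 * x3^2 + x1^2 + x2^2 = (2/(\<theta>-\<phi>)^2 + 1/\<theta>^2 + 1/(1-\<theta>)^2) * (t - \<theta>)^2"
    using th by (simp add: x1_def x2_def x3_def field_simps power2_eq_square)
  have main: "- sqrt (real n) * L + sqrt (real n) * (- (1/(\<theta>-\<phi>) - 1/(2*\<theta>) - 1/(2*(1-\<theta>)))) * (t - \<theta>)
      = sqrt (real n) * ((ln (1 + x3) - x3) - (ln (1 + x1) - x1) / 2 + (ln (1 + x2) - x2) / 2 - E - G)"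
    unfolding Lform mult.assoc lin by (simp add: algebra_simps add_divide_distrib diff_divide_distrib)
  have "\<bar>(ln (1 + x3) - x3) - (ln (1 + x1) - x1) / 2 + (ln (1 + x2) - x2) / 2 - E - G\<bar>
      \<le> 2 * x3^2 + x1^2 + x2^2 + ((2/real n + 2/real k + 2/real (n-k)) + (\<epsilon> / (1 - \<rho>) + 2 * \<rho>^Suc N))"
    by (rule arith2[OF q1 q2 q3 Eb Gb])
  then have "\<bar>sqrt (real n) * ((ln (1 + x3) - x3) - (ln (1 + x1) - x1) / 2 + (ln (1 + x2) - x2) / 2 - E - G)\<bar>
     \<le> sqrt (real n) * (2 * x3^2 + x1^2 + x2^2 + ((2/real n + 2/real k + 2/real (n-k)) + (\<epsilon> / (1 - \<rho>) + 2 * \<rho>^Suc N)))"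
    by (simp add: abs_mult mult_left_mono)
  then show ?thesis unfolding L_def[symmetric] main sq by (simp add: algebra_simps)
qed

abbreviation "Phi \<equiv> cdf std_normal_distribution"

lemma std_normal_prob: "prob_space std_normal_distribution"
  using real_dist_normal_dist by (simp add: real_distribution_def)

lemma Phi_cont: "isCont Phi x"
proof -
  interpret real_distribution std_normal_distribution by (rule real_dist_normal_dist)
  have "emeasure std_normal_distribution {x} = (\<integral>\<^sup>+ y. ennreal (normal_density 0 1 y) * indicator {x} y \<partial>lborel)"
    by (subst emeasure_density) auto
  also have "\<dots> = 0"
    by (subst nn_integral_0_iff_AE) (use AE_lborel_singleton[of x] in \<open>auto elim!: eventually_mono\<close>)
  finally have "measure std_normal_distribution {x} = 0" by (simp add: measure_def)
  then show ?thesis by (simp add: isCont_cdf)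
qed

lemma normal_distr_scale:
  assumes c: "c > 0"
  shows "cdf (normal_distribution 0 (c^2)) x = Phi (x / c)"
proof -
  interpret S: prob_space std_normal_distribution by (rule std_normal_prob)
  have sets: "sets std_normal_distribution = sets lborel" by simp
  have "distributed std_normal_distribution lborel (\<lambda>x. x) (normal_density 0 1)"
    unfolding distributed_def using distr_id2[OF sets[symmetric]] by simp
  from S.normal_density_affine[OF this, of c 0] c
  have "distributed std_normal_distribution lborel (\<lambda>x. c * x) (normal_density 0 c)" by simp
  then have D: "distr std_normal_distribution lborel (\<lambda>x. c * x) = density lborel (normal_density 0 c)"
    by (simp add: distributed_def)
  have N: "normal_distribution 0 (c^2) = distr std_normal_distribution lborel (\<lambda>x. c * x)"
    unfolding normal_distribution_def D using c by simp
  have "cdf (normal_distribution 0 (c^2)) x = measure std_normal_distribution ((\<lambda>y. c * y) -` {..x} \<inter> space std_normal_distribution)"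
    unfolding N cdf_def2 by (subst measure_distr) auto
  also have "(\<lambda>y. c * y) -` {..x} \<inter> space std_normal_distribution = {..x/c}"
    using c by (auto simp: field_simps)
  finally show ?thesis by (simp add: cdf_def2)
qed

lemma normal_cdf_cont: "c > 0 \<Longrightarrow> isCont (cdf (normal_distribution 0 (c^2))) x"
proof -
  assume c: "c > 0"
  have "cdf (normal_distribution 0 (c^2)) = (\<lambda>x. Phi (x / c))" using normal_distr_scale[OF c] by auto
  moreover have "isCont (\<lambda>x. Phi (x / c)) x"
    by (rule isCont_o2[OF _ Phi_cont]) (use c in \<open>auto intro!: continuous_intros\<close>)
  ultimately show ?thesis by simp
qed

lemma cdf_distr_rv:
  assumes "f \<in> borel_measurable M"
  shows "cdf (distr M borel f) x = measure M {\<omega>\<in>space M. f \<omega> \<le> x}"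
  unfolding cdf_def2 using assms by (subst measure_distr) (auto intro!: arg_cong[where f="measure M"])

lemma slutsky_normal:
  fixes M :: "'a measure" and X Y :: "nat \<Rightarrow> 'a \<Rightarrow> real"
  assumes P: "prob_space M" and Xm: "\<And>n. X n \<in> borel_measurable M" and Ym: "\<And>n. Y n \<in> borel_measurable M"
    and Yc: "weak_conv_m (\<lambda>n. distr M borel (Y n)) std_normal_distribution"
    and c: "c > 0"
    and small: "\<And>\<epsilon>. \<epsilon> > 0 \<Longrightarrow> (\<lambda>n. measure M {\<omega>\<in>space M. \<epsilon> < \<bar>X n \<omega> - c * Y n \<omega>\<bar>}) \<longlonglongrightarrow> 0"
  shows "weak_conv_m (\<lambda>n. distr M borel (X n)) (normal_distribution 0 (c^2))"
proof -
  interpret prob_space M by (rule P)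
  have Yconv: "(\<lambda>n. prob {\<omega>\<in>space M. Y n \<omega> \<le> y}) \<longlonglongrightarrow> Phi y" for y
    using Yc Phi_cont[of y] unfolding weak_conv_m_def weak_conv_def cdf_distr_rv[OF Ym] by auto
  show ?thesis unfolding weak_conv_m_def weak_conv_def
  proof (intro allI impI)
    fix x
    show "(\<lambda>n. cdf (distr M borel (X n)) x) \<longlonglongrightarrow> cdf (normal_distribution 0 (c^2)) x"
      unfolding cdf_distr_rv[OF Xm] normal_distr_scale[OF c]
    proof (rule tendstoI)
      fix \<eta> :: real assume \<eta>: "\<eta> > 0"
      obtain d where d: "d > 0" "\<And>y. y \<noteq> x/c \<Longrightarrow> \<bar>y - x/c\<bar> < d \<Longrightarrow> \<bar>Phi y - Phi (x/c)\<bar> < \<eta>/3"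
        using Phi_cont[of "x/c", unfolded isCont_def LIM_eq] \<eta>
        by (metis divide_pos_pos real_norm_def zero_less_numeral)
      define \<epsilon> where "\<epsilon> = c * d / 2"
      have \<epsilon>0: "\<epsilon> > 0" using c d by (simp add: \<epsilon>_def)
      have xp: "(x + \<epsilon>) / c = x/c + d/2" "(x - \<epsilon>) / c = x/c - d/2"
        using c by (simp_all add: \<epsilon>_def field_simps)
      have Pp: "\<bar>Phi ((x + \<epsilon>) / c) - Phi (x/c)\<bar> < \<eta>/3" unfolding xp by (rule d(2)) (use d in auto)
      have Pm: "\<bar>Phi ((x - \<epsilon>) / c) - Phi (x/c)\<bar> < \<eta>/3" unfolding xp by (rule d(2)) (use d in auto)
      have ev: "eventually (\<lambda>n. dist (prob {\<omega>\<in>space M. Y n \<omega> \<le> (x + \<epsilon>) / c}) (Phi ((x + \<epsilon>) / c)) < \<eta>/3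
          \<and> dist (prob {\<omega>\<in>space M. Y n \<omega> \<le> (x - \<epsilon>) / c}) (Phi ((x - \<epsilon>) / c)) < \<eta>/3
          \<and> dist (measure M {\<omega>\<in>space M. \<epsilon> < \<bar>X n \<omega> - c * Y n \<omega>\<bar>}) 0 < \<eta>/3) sequentially"
        using \<eta> by (intro eventually_conj tendstoD[OF Yconv] tendstoD[OF small[OF \<epsilon>0]]) auto
      show "eventually (\<lambda>n. dist (prob {\<omega>\<in>space M. X n \<omega> \<le> x}) (Phi (x/c)) < \<eta>) sequentially"
      proof (rule eventually_mono[OF ev])
        fix n assume H: "dist (prob {\<omega>\<in>space M. Y n \<omega> \<le> (x + \<epsilon>) / c}) (Phi ((x + \<epsilon>) / c)) < \<eta>/3
          \<and> dist (prob {\<omega>\<in>space M. Y n \<omega> \<le> (x - \<epsilon>) / c}) (Phi ((x - \<epsilon>) / c)) < \<eta>/3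
          \<and> dist (measure M {\<omega>\<in>space M. \<epsilon> < \<bar>X n \<omega> - c * Y n \<omega>\<bar>}) 0 < \<eta>/3"
        define A where "A = {\<omega>\<in>space M. X n \<omega> \<le> x}"
        define Bp where "Bp = {\<omega>\<in>space M. Y n \<omega> \<le> (x + \<epsilon>) / c}"
        define Bm where "Bm = {\<omega>\<in>space M. Y n \<omega> \<le> (x - \<epsilon>) / c}"
        define R where "R = {\<omega>\<in>space M. \<epsilon> < \<bar>X n \<omega> - c * Y n \<omega>\<bar>}"
        have meas: "A \<in> sets M" "Bp \<in> sets M" "Bm \<in> sets M" "R \<in> sets M"
          unfolding A_def Bp_def Bm_def R_def using Xm[of n] Ym[of n] by measurable
        have dv: "Y n \<omega> \<le> z / c \<longleftrightarrow> c * Y n \<omega> \<le> z" for \<omega> z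
          using c by (simp add: pos_le_divide_eq mult.commute)
        have s1: "A \<subseteq> Bp \<union> R" unfolding A_def Bp_def R_def dv by auto
        have s2: "Bm \<subseteq> A \<union> R" unfolding A_def Bm_def R_def dv by auto
        have u: "prob A \<le> prob Bp + prob R"
          using finite_measure_mono[OF s1] measure_Un_le[of Bp M R] meas by auto
        have l: "prob Bm \<le> prob A + prob R"
          using finite_measure_mono[OF s2] measure_Un_le[of A M R] meas by auto
        have R0: "prob R \<ge> 0" by simp
        show "dist (prob A) (Phi (x/c)) < \<eta>"
          using H u l R0 Pp Pm unfolding Bp_def[symmetric] Bm_def[symmetric] R_def[symmetric] dist_real_def
          by linarith
      qed
    qed
  qed
qed

lemma tightness:
  fixes M :: "'a measure" and Y :: "nat \<Rightarrow> 'a \<Rightarrow> real"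
  assumes P: "prob_space M" and Ym: "\<And>n. Y n \<in> borel_measurable M"
    and Yc: "weak_conv_m (\<lambda>n. distr M borel (Y n)) std_normal_distribution"
    and L: "filterlim L at_top sequentially"
  shows "(\<lambda>n. measure M {\<omega>\<in>space M. L n < \<bar>Y n \<omega>\<bar>}) \<longlonglongrightarrow> 0"
proof (rule tendstoI)
  interpret prob_space M by (rule P)
  interpret S: real_distribution std_normal_distribution by (rule real_dist_normal_dist)
  have Yconv: "(\<lambda>n. prob {\<omega>\<in>space M. Y n \<omega> \<le> y}) \<longlonglongrightarrow> Phi y" for y
    using Yc Phi_cont[of y] unfolding weak_conv_m_def weak_conv_def cdf_distr_rv[OF Ym] by auto
  fix \<eta> :: real assume \<eta>: "\<eta> > 0"
  have "eventually (\<lambda>y. dist (Phi y) 0 < \<eta>/4) at_bot"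
    using S.cdf_lim_at_bot \<eta> by (intro tendstoD) auto
  then obtain A1 where A1: "\<And>y. y \<le> A1 \<Longrightarrow> Phi y < \<eta>/4"
    unfolding eventually_at_bot_linorder dist_real_def using S.cdf_nonneg by fastforce
  have "eventually (\<lambda>y. dist (Phi y) 1 < \<eta>/4) at_top"
    using S.cdf_lim_at_top_prob \<eta> by (intro tendstoD) auto
  then obtain A2 where A2: "\<And>y. y \<ge> A2 \<Longrightarrow> 1 - Phi y < \<eta>/4"
    unfolding eventually_at_top_linorder dist_real_def by (metis abs_minus_commute abs_less_iff)
  define A where "A = max (- A1) A2"
  have PA: "Phi (- A) < \<eta>/4" "1 - Phi A < \<eta>/4" using A1[of "-A"] A2[of A] by (auto simp: A_def)
  have ev: "eventually (\<lambda>n. A \<le> L n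
      \<and> dist (prob {\<omega>\<in>space M. Y n \<omega> \<le> - A}) (Phi (- A)) < \<eta>/4
      \<and> dist (prob {\<omega>\<in>space M. Y n \<omega> \<le> A}) (Phi A) < \<eta>/4) sequentially"
    using \<eta> by (intro eventually_conj tendstoD[OF Yconv]) (auto simp: filterlim_at_top[THEN iffD1, OF L])
  show "eventually (\<lambda>n. dist (measure M {\<omega>\<in>space M. L n < \<bar>Y n \<omega>\<bar>}) 0 < \<eta>) sequentially"
  proof (rule eventually_mono[OF ev])
    fix n assume H: "A \<le> L n
      \<and> dist (prob {\<omega>\<in>space M. Y n \<omega> \<le> - A}) (Phi (- A)) < \<eta>/4
      \<and> dist (prob {\<omega>\<in>space M. Y n \<omega> \<le> A}) (Phi A) < \<eta>/4"
    define R where "R = {\<omega>\<in>space M. L n < \<bar>Y n \<omega>\<bar>}"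
    define B1 where "B1 = {\<omega>\<in>space M. Y n \<omega> \<le> - A}"
    define B2 where "B2 = {\<omega>\<in>space M. Y n \<omega> \<le> A}"
    have meas: "R \<in> sets M" "B1 \<in> sets M" "B2 \<in> sets M"
      unfolding R_def B1_def B2_def using Ym[of n] by measurable
    have "R \<subseteq> B1 \<union> (space M - B2)" unfolding R_def B1_def B2_def using H by auto
    then have "prob R \<le> prob B1 + prob (space M - B2)"
      using finite_measure_mono measure_Un_le[of B1 M "space M - B2"] meas
      by (meson order.trans sets.Diff sets.Un sets.top)
    also have "prob (space M - B2) = 1 - prob B2" by (rule prob_compl[OF meas(3)])
    finally have "prob R \<le> prob B1 + (1 - prob B2)" .
    moreover have "prob R \<ge> 0" by simp
    ultimately show "dist (prob R) 0 < \<eta>"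
      using H PA unfolding B1_def[symmetric] B2_def[symmetric] dist_real_def by linarith
  qed
qed

lemma bern_facts:
  fixes M :: "'a measure" and X :: "'a \<Rightarrow> real"
  assumes P: "prob_space M" and meas: "X \<in> borel_measurable M"
    and b01: "AE \<omega> in M. X \<omega> = 0 \<or> X \<omega> = 1" and bp: "measure M {\<omega>\<in>space M. X \<omega> = 1} = \<theta>"
  shows "integral\<^sup>L M X = \<theta>" "integrable M (\<lambda>\<omega>. (X \<omega>)^2)"
    "integral\<^sup>L M (\<lambda>\<omega>. (X \<omega> - \<theta>)^2) = \<theta> * (1 - \<theta>)"
    "cdf (distr M borel X) x = (if x < 0 then 0 else if x < 1 then 1 - \<theta> else 1)"
proof -
  interpret prob_space M by (rule P)
  define A where "A = {\<omega>\<in>space M. X \<omega> = 1}"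
  have Am: "A \<in> sets M" unfolding A_def using meas by measurable
  define I where "I = (indicator A :: 'a \<Rightarrow> real)"
  have Im: "I \<in> borel_measurable M" unfolding I_def using Am by simp
  have XI: "AE \<omega> in M. X \<omega> = I \<omega>"
    using b01 AE_space by eventually_elim (auto simp: I_def A_def indicator_def)
  have intI: "integrable M I" unfolding I_def using Am by (intro integrable_real_indicator) (auto simp: emeasure_eq_measure)
  have eI: "integral\<^sup>L M I = \<theta>" unfolding I_def using Am bp by (simp add: A_def)
  show "integral\<^sup>L M X = \<theta>" using integral_cong_AE[OF meas Im XI] eI by simp
  have X2: "AE \<omega> in M. (X \<omega>)^2 = I \<omega>"
    using b01 AE_space by eventually_elim (auto simp: I_def A_def indicator_def)
  show "integrable M (\<lambda>\<omega>. (X \<omega>)^2)"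
    using integrable_cong_AE[of "\<lambda>\<omega>. (X \<omega>)^2" M I] X2 Im meas intI by auto
  have X3: "AE \<omega> in M. (X \<omega> - \<theta>)^2 = \<theta>^2 + (1 - 2*\<theta>) * I \<omega>"
    using b01 AE_space by eventually_elim (auto simp: I_def A_def indicator_def power2_eq_square algebra_simps)
  have "integral\<^sup>L M (\<lambda>\<omega>. (X \<omega> - \<theta>)^2) = integral\<^sup>L M (\<lambda>\<omega>. \<theta>^2 + (1 - 2*\<theta>) * I \<omega>)"
    by (rule integral_cong_AE) (use X3 meas Im in auto)
  also have "\<dots> = \<theta>^2 + (1 - 2*\<theta>) * \<theta>"
    using intI eI by (simp add: prob_space)
  finally show "integral\<^sup>L M (\<lambda>\<omega>. (X \<omega> - \<theta>)^2) = \<theta> * (1 - \<theta>)"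
    by (simp add: power2_eq_square algebra_simps)
  have c: "cdf (distr M borel X) x = prob {\<omega>\<in>space M. X \<omega> \<le> x}"
    unfolding cdf_def2 using meas by (subst measure_distr) (auto intro!: arg_cong[where f="measure M"])
  have Sm: "{\<omega>\<in>space M. X \<omega> \<le> x} \<in> sets M" using meas by measurable
  show "cdf (distr M borel X) x = (if x < 0 then 0 else if x < 1 then 1 - \<theta> else 1)"
    unfolding c
  proof (cases "x < 0")
    case True
    have "prob {\<omega>\<in>space M. X \<omega> \<le> x} = prob {}"
      by (rule measure_eq_AE) (use b01 True Sm in \<open>auto elim!: eventually_mono\<close>)
    then show "prob {\<omega>\<in>space M. X \<omega> \<le> x} = (if x < 0 then 0 else if x < 1 then 1 - \<theta> else 1)"
      using True by simp
  next
    case F: False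
    show "prob {\<omega>\<in>space M. X \<omega> \<le> x} = (if x < 0 then 0 else if x < 1 then 1 - \<theta> else 1)"
    proof (cases "x < 1")
      case True
      have "prob {\<omega>\<in>space M. X \<omega> \<le> x} = prob (space M - A)"
        by (rule measure_eq_AE) (use b01 True F Sm Am in \<open>auto elim!: eventually_mono simp: A_def\<close>)
      also have "\<dots> = 1 - \<theta>" using prob_compl[OF Am] bp by (simp add: A_def)
      finally show ?thesis using True F by simp
    next
      case False
      have "prob {\<omega>\<in>space M. X \<omega> \<le> x} = prob (space M)"
        by (rule measure_eq_AE) (use b01 False F Sm in \<open>auto elim!: eventually_mono\<close>)
      then show ?thesis using False F by (simp add: prob_space)
    qed
  qed
qed

lemma sum01:
  assumes "\<forall>i. B i \<omega> = 0 \<or> B i \<omega> = (1::real)"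
  shows "\<exists>k\<le>n. (\<Sum>i<n. B i \<omega>) = real k"
proof (induction n)
  case 0 then show ?case by simp
next
  case (Suc n)
  then obtain k where k: "k \<le> n" "(\<Sum>i<n. B i \<omega>) = real k" by blast
  show ?case
  proof (cases "B n \<omega> = 0")
    case True then show ?thesis using k by (intro exI[of _ k]) auto
  next
    case False then have "B n \<omega> = 1" using assms by auto
    then show ?thesis using k by (intro exI[of _ "Suc k"]) auto
  qed
qed

lemma generic_clt:
  fixes M :: "'a measure" and B :: "nat \<Rightarrow> 'a \<Rightarrow> real" and \<theta> D \<delta> K :: real
    and F :: "nat \<Rightarrow> real \<Rightarrow> real" and e :: "nat \<Rightarrow> real"
  assumes P: "prob_space M" and th: "0 < \<theta>" "\<theta> < 1" and D: "D \<noteq> 0"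
    and meas: "\<And>i. B i \<in> borel_measurable M"
    and indep: "prob_space.indep_vars M (\<lambda>_. borel) B UNIV"
    and bern01: "\<And>i. AE \<omega> in M. B i \<omega> = 0 \<or> B i \<omega> = 1"
    and bernp: "\<And>i. measure M {\<omega> \<in> space M. B i \<omega> = 1} = \<theta>"
    and Fm: "\<And>n. F n \<in> borel_measurable borel"
    and \<delta>: "\<delta> > 0" and e: "e \<longlonglongrightarrow> 0"
    and det: "eventually (\<lambda>n. \<forall>k\<le>n. \<bar>real k / real n - \<theta>\<bar> \<le> \<delta> \<longrightarrow>
        \<bar>F n (real k / real n) + sqrt (real n) * D * (real k / real n - \<theta>)\<bar>
          \<le> K * sqrt (real n) * (real k / real n - \<theta>)^2 + e n) sequentially"
  shows "weak_conv_m (\<lambda>n. distr M borel (\<lambda>\<omega>. F n ((\<Sum>i<n. B i \<omega>) / real n)))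
           (normal_distribution 0 (D^2 * (\<theta> * (1 - \<theta>))))"
proof -
  interpret prob_space M by (rule P)
  define \<sigma> where "\<sigma> = sqrt (\<theta> * (1 - \<theta>))"
  have \<sigma>0: "\<sigma> > 0" using th by (simp add: \<sigma>_def)
  have \<sigma>2: "\<sigma>^2 = \<theta> * (1 - \<theta>)" using th by (simp add: \<sigma>_def)
  define s :: real where "s = (if D > 0 then -1 else 1)"
  have s2: "s * s = 1" by (simp add: s_def)
  have Ds: "D * s = - \<bar>D\<bar>" by (simp add: s_def)
  define c where "c = \<bar>D\<bar> * \<sigma>"
  have c0: "c > 0" using D \<sigma>0 by (simp add: c_def)
  have c2: "c^2 = D^2 * (\<theta> * (1 - \<theta>))" unfolding c_def using \<sigma>2 by (simp add: power_mult_distrib)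
  define Xs where "Xs i \<omega> = s * B i \<omega>" for i \<omega>
  have Xsm: "Xs i \<in> borel_measurable M" for i unfolding Xs_def using meas[of i] by measurable
  note bf = bern_facts[OF P meas bern01 bernp]
  have dB: "distr M borel (B i) = distr M borel (B 0)" for i
  proof (rule cdf_unique)
    show "real_distribution (distr M borel (B i))" "real_distribution (distr M borel (B 0))"
      using meas by auto
    show "cdf (distr M borel (B i)) = cdf (distr M borel (B 0))"
      using bf(4) by (auto simp: fun_eq_iff)
  qed
  have dX: "distr M borel (Xs i) = distr M borel (Xs 0)" for i
  proof -
    have "distr M borel (Xs i) = distr (distr M borel (B i)) borel (\<lambda>x. s * x)" for i
      unfolding Xs_def using meas[of i] by (subst distr_distr) (auto simp: o_def)
    then show ?thesis using dB[of i] by simp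
  qed
  have CLT: "weak_conv_m (\<lambda>n. distr M borel (\<lambda>x. (\<Sum>i<n. Xs i x - s * \<theta>) / sqrt (real n * \<sigma>\<^sup>2))) std_normal_distribution"
  proof (rule central_limit_theorem[where \<mu>="distr M borel (Xs 0)"])
    show "indep_vars (\<lambda>i. borel) Xs UNIV"
      unfolding Xs_def using indep by (rule indep_vars_compose2[where Y="\<lambda>i x. s * x"]) auto
    show "expectation (Xs n) = s * \<theta>" for n unfolding Xs_def using bf(1) by simp
    show "\<sigma> > 0" by (rule \<sigma>0)
    show "integrable M (\<lambda>x. (Xs n x)\<^sup>2)" for n
      unfolding Xs_def using bf(2) s2 by (simp add: power_mult_distrib power2_eq_square[of s])
    show "variance (Xs n) = \<sigma>\<^sup>2" for n
    proof -
      have "variance (Xs n) = integral\<^sup>L M (\<lambda>\<omega>. (s * B n \<omega> - s * \<theta>)^2)"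
        unfolding Xs_def using bf(1) by simp
      also have "\<dots> = integral\<^sup>L M (\<lambda>\<omega>. (B n \<omega> - \<theta>)^2)"
      proof -
        have "(s * b - s * \<theta>)^2 = (b - \<theta>)^2" for b
          using s2 by (simp add: power2_eq_square algebra_simps)
        then show ?thesis by simp
      qed
      finally show ?thesis using bf(3) \<sigma>2 by simp
    qed
    show "distr M borel (Xs n) = distr M borel (Xs 0)" for n by (rule dX)
  qed
  define Y where "Y n \<omega> = (\<Sum>i<n. Xs i \<omega> - s * \<theta>) / sqrt (real n * \<sigma>\<^sup>2)" for n \<omega>
  define X where "X n \<omega> = F n ((\<Sum>i<n. B i \<omega>) / real n)" for n \<omega>
  have Ym: "Y n \<in> borel_measurable M" for n unfolding Y_def using Xsm by measurable
  have Xm: "X n \<in> borel_measurable M" for n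
    unfolding X_def by (rule measurable_compose[OF _ Fm]) (use meas in measurable)
  have CLT': "weak_conv_m (\<lambda>n. distr M borel (Y n)) std_normal_distribution"
    using CLT unfolding Y_def by simp
  have small: "(\<lambda>n. measure M {\<omega>\<in>space M. \<epsilon> < \<bar>X n \<omega> - c * Y n \<omega>\<bar>}) \<longlonglongrightarrow> 0" if \<epsilon>: "\<epsilon> > 0" for \<epsilon>
  proof -
    define L where "L n = real n powr (1/8)" for n :: nat
    have Lt: "filterlim L at_top sequentially" unfolding L_def by real_asymp
    have T: "(\<lambda>n. measure M {\<omega>\<in>space M. L n < \<bar>Y n \<omega>\<bar>}) \<longlonglongrightarrow> 0"
      by (rule tightness[OF P Ym CLT' Lt])
    have g1: "(\<lambda>n. \<sigma> * (L n / sqrt (real n))) \<longlonglongrightarrow> \<sigma> * 0"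
      by (intro tendsto_mult tendsto_const) (unfold L_def, real_asymp)
    have g2: "(\<lambda>n. \<bar>K\<bar> * \<sigma>^2 * ((L n)^2 / sqrt (real n)) + e n) \<longlonglongrightarrow> \<bar>K\<bar> * \<sigma>^2 * 0 + 0"
      by (intro tendsto_add tendsto_mult tendsto_const e) (unfold L_def, real_asymp)
    have ev: "eventually (\<lambda>n. (\<forall>k\<le>n. \<bar>real k / real n - \<theta>\<bar> \<le> \<delta> \<longrightarrow>
        \<bar>F n (real k / real n) + sqrt (real n) * D * (real k / real n - \<theta>)\<bar>
          \<le> K * sqrt (real n) * (real k / real n - \<theta>)^2 + e n)
        \<and> n \<ge> 1
        \<and> dist (\<sigma> * (L n / sqrt (real n))) (\<sigma> * 0) < \<delta>
        \<and> dist (\<bar>K\<bar> * \<sigma>^2 * ((L n)^2 / sqrt (real n)) + e n) (\<bar>K\<bar> * \<sigma>^2 * 0 + 0) < \<epsilon>) sequentially"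
      by (intro eventually_conj det tendstoD[OF g1] tendstoD[OF g2] \<delta> \<epsilon> eventually_ge_at_top)
    have AEall: "AE \<omega> in M. \<forall>i. B i \<omega> = 0 \<or> B i \<omega> = 1"
      using bern01 by (simp add: AE_all_countable)
    have ev2: "eventually (\<lambda>n. measure M {\<omega>\<in>space M. \<epsilon> < \<bar>X n \<omega> - c * Y n \<omega>\<bar>}
        \<le> measure M {\<omega>\<in>space M. L n < \<bar>Y n \<omega>\<bar>}) sequentially"
    proof (rule eventually_mono[OF ev])
      fix n assume H: "(\<forall>k\<le>n. \<bar>real k / real n - \<theta>\<bar> \<le> \<delta> \<longrightarrow>
        \<bar>F n (real k / real n) + sqrt (real n) * D * (real k / real n - \<theta>)\<bar>
          \<le> K * sqrt (real n) * (real k / real n - \<theta>)^2 + e n)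
        \<and> n \<ge> 1
        \<and> dist (\<sigma> * (L n / sqrt (real n))) (\<sigma> * 0) < \<delta>
        \<and> dist (\<bar>K\<bar> * \<sigma>^2 * ((L n)^2 / sqrt (real n)) + e n) (\<bar>K\<bar> * \<sigma>^2 * 0 + 0) < \<epsilon>"
      have n0: "real n > 0" "sqrt (real n) > 0" using H by auto
      have Tm: "{\<omega>\<in>space M. L n < \<bar>Y n \<omega>\<bar>} \<in> sets M" using Ym[of n] by measurable
      show "measure M {\<omega>\<in>space M. \<epsilon> < \<bar>X n \<omega> - c * Y n \<omega>\<bar>} \<le> measure M {\<omega>\<in>space M. L n < \<bar>Y n \<omega>\<bar>}"
      proof (rule finite_measure_mono_AE[OF _ Tm])
        show "AE \<omega> in M. \<omega> \<in> {\<omega>\<in>space M. \<epsilon> < \<bar>X n \<omega> - c * Y n \<omega>\<bar>} \<longrightarrow> \<omega> \<in> {\<omega>\<in>space M. L n < \<bar>Y n \<omega>\<bar>}"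
        proof (rule eventually_mono[OF AEall], safe)
          fix \<omega> assume b: "\<forall>i. B i \<omega> = 0 \<or> B i \<omega> = 1" and sp: "\<omega> \<in> space M"
            and big: "\<epsilon> < \<bar>X n \<omega> - c * Y n \<omega>\<bar>"
          show "L n < \<bar>Y n \<omega>\<bar>"
          proof (rule ccontr)
            assume "\<not> L n < \<bar>Y n \<omega>\<bar>"
            then have YL: "\<bar>Y n \<omega>\<bar> \<le> L n" by simp
            obtain k where k: "k \<le> n" "(\<Sum>i<n. B i \<omega>) = real k" using sum01[of B \<omega> n] b by blast
            define t where "t = real k / real n"
            have Xt: "X n \<omega> = F n t" unfolding X_def t_def k(2) ..
            have sumX: "(\<Sum>i<n. Xs i \<omega> - s * \<theta>) = s * (real k - real n * \<theta>)"
              unfolding Xs_def sum_subtractf sum_distrib_left[symmetric] k(2) by (simp add: algebra_simps)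
            have sq: "sqrt (real n * \<sigma>\<^sup>2) = sqrt (real n) * \<sigma>" using \<sigma>0 by (simp add: real_sqrt_mult)
            define z where "z = sqrt (real n) * (t - \<theta>)"
            have zY: "z = s * \<sigma> * Y n \<omega>"
            proof -
              have "s * \<sigma> * Y n \<omega> = (s * s) * (real k - real n * \<theta>) / sqrt (real n)"
                unfolding Y_def sumX sq using \<sigma>0 n0 by (simp add: field_simps)
              also have "\<dots> = (real k - real n * \<theta>) / sqrt (real n)" using s2 by simp
              also have "\<dots> = z" unfolding z_def t_def using n0
                by (simp add: field_simps)
              finally show ?thesis by simp
            qed
            have az: "\<bar>z\<bar> = \<sigma> * \<bar>Y n \<omega>\<bar>" unfolding zY using \<sigma>0 by (simp add: abs_mult s_def)
            have tz: "t - \<theta> = z / sqrt (real n)" unfolding z_def using n0 by simp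
            have "\<bar>t - \<theta>\<bar> = \<sigma> * \<bar>Y n \<omega>\<bar> / sqrt (real n)" unfolding tz az[symmetric] using n0 by (simp add: abs_divide)
            also have "\<dots> \<le> \<sigma> * L n / sqrt (real n)"
              using YL \<sigma>0 n0 by (intro divide_right_mono mult_left_mono) auto
            also have "\<dots> \<le> \<bar>\<sigma> * L n\<bar> / sqrt (real n)" using n0 by (intro divide_right_mono abs_ge_self) auto
            also have "\<dots> < \<delta>" using H by (simp add: dist_real_def)
            finally have td: "\<bar>real k / real n - \<theta>\<bar> \<le> \<delta>" unfolding t_def by simp
            have bound: "\<bar>F n t + sqrt (real n) * D * (t - \<theta>)\<bar> \<le> K * sqrt (real n) * (t - \<theta>)^2 + e n"
              using H k(1) td unfolding t_def by blast
            have lin: "sqrt (real n) * D * (t - \<theta>) = - c * Y n \<omega>"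
            proof -
              have "sqrt (real n) * D * (t - \<theta>) = D * z" unfolding z_def by simp
              also have "\<dots> = (D * s) * \<sigma> * Y n \<omega>" unfolding zY by simp
              finally show ?thesis unfolding Ds c_def by simp
            qed
            have quad: "K * sqrt (real n) * (t - \<theta>)^2 \<le> \<bar>K\<bar> * \<sigma>^2 * ((L n)^2 / sqrt (real n))"
            proof -
              have "K * sqrt (real n) * (t - \<theta>)^2 = K * (z^2 / sqrt (real n))"
              proof -
                have gen: "K * r * (z / r)^2 = K * (z^2 / r)" if "r > 0" for r :: real
                  using that by (simp add: field_simps power2_eq_square)
                show ?thesis unfolding tz by (rule gen) (use n0 in auto)
              qed
              also have "\<dots> \<le> \<bar>K\<bar> * (z^2 / sqrt (real n))"
                using n0 by (intro mult_right_mono) auto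
              also have "z^2 = \<sigma>^2 * (Y n \<omega>)^2" using az by (metis power2_abs power_mult_distrib)
              also have "(Y n \<omega>)^2 \<le> (L n)^2" using YL by (metis abs_ge_zero order.trans power2_abs power_mono)
              then have "\<bar>K\<bar> * (\<sigma>^2 * (Y n \<omega>)^2 / sqrt (real n)) \<le> \<bar>K\<bar> * (\<sigma>^2 * (L n)^2 / sqrt (real n))"
                using n0 by (intro mult_left_mono divide_right_mono) auto
              finally show ?thesis by (simp add: mult.assoc)
            qed
            have "\<bar>X n \<omega> - c * Y n \<omega>\<bar> \<le> \<bar>K\<bar> * \<sigma>^2 * ((L n)^2 / sqrt (real n)) + e n"
              using bound quad unfolding Xt lin by simp
            moreover have "\<bar>\<bar>K\<bar> * \<sigma>^2 * ((L n)^2 / sqrt (real n)) + e n\<bar> < \<epsilon>"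
              using H by (simp add: dist_real_def)
            ultimately show False using big by linarith
          qed
        qed
      qed
    qed
    show ?thesis
      by (rule tendsto_sandwich[OF _ ev2 tendsto_const T]) auto
  qed
  have "weak_conv_m (\<lambda>n. distr M borel (X n)) (normal_distribution 0 (c^2))"
    by (rule slutsky_normal[OF P Xm Ym CLT' c0 small])
  then show ?thesis unfolding c2 X_def by simp
qed

lemma k_bounds:
  fixes \<theta> \<delta> :: real
  assumes th: "0 < \<theta>" "\<theta> < 1" and n: "n > 0" and k: "k \<le> n"
    and d: "\<delta> \<le> \<theta>/2" "\<delta> \<le> (1-\<theta>)/2" and t: "\<bar>real k / real n - \<theta>\<bar> \<le> \<delta>"
  shows "real k \<ge> \<theta> * real n / 2" "real (n - k) \<ge> (1 - \<theta>) * real n / 2"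
proof -
  have n0: "real n > 0" using n by simp
  have "real k / real n \<ge> \<theta> / 2" using t d by (simp add: abs_le_iff)
  then show "real k \<ge> \<theta> * real n / 2" using n0 by (simp add: field_simps)
  have "real k / real n \<le> \<theta> + \<delta>" using t by (simp add: abs_le_iff)
  then have a: "real k \<le> (\<theta> + \<delta>) * real n" using n0 by (simp add: field_simps)
  have "(1-\<theta>)/2 \<le> 1 - \<theta> - \<delta>" using d(2) by simp
  then have "(1-\<theta>)/2 * real n \<le> (1 - \<theta> - \<delta>) * real n" by (rule mult_right_mono) simp
  then show "real (n - k) \<ge> (1 - \<theta>) * real n / 2" using k a by (simp add: of_nat_diff algebra_simps)
qed

lemma inv_bound: "0 < a \<Longrightarrow> a \<le> x \<Longrightarrow> 2 / x \<le> 2 / (a::real)"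
  by (simp add: divide_left_mono)

lemma err_bound:
  fixes \<theta> :: real
  assumes th: "0 < \<theta>" "\<theta> < 1" and n: "real n > 0"
    and kb: "real k \<ge> \<theta> * real n / 2" "real (n - k) \<ge> (1 - \<theta>) * real n / 2"
  shows "2/real n + 2/real k + 2/real (n-k) \<le> 2/real n + 4/(\<theta>*real n) + 4/((1-\<theta>)*real n)"
proof -
  have "2 / real k \<le> 2 / (\<theta> * real n / 2)" by (rule inv_bound) (use th n kb in auto)
  moreover have "2 / real (n-k) \<le> 2 / ((1 - \<theta>) * real n / 2)" by (rule inv_bound) (use th n kb in auto)
  ultimately show ?thesis by simp
qed

lemma part1_det:
  fixes \<phi> \<theta> \<delta> :: real
  assumes ph: "0 < \<phi>" "\<phi> < \<theta>" "\<theta> < 1"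
    and d: "\<delta> \<le> \<theta>/2" "\<delta> \<le> (1-\<theta>)/2" "\<delta> \<le> (\<theta>-\<phi>)/2"
  shows "eventually (\<lambda>n. \<forall>k\<le>n. \<bar>real k / real n - \<theta>\<bar> \<le> \<delta> \<longrightarrow>
   \<bar>- sqrt (real n) * ln (sqrt (2 * pi * \<theta> * (1 - \<theta>)) * P_PBR n (real k / real n) \<phi> / (sqrt (real n) * P_CH n (real k / real n) \<phi>))
     + sqrt (real n) * (- (1/\<theta> - 1/(1-\<theta>))/2) * (real k / real n - \<theta>)\<bar>
   \<le> (1/\<theta>^2 + 1/(1-\<theta>)^2) * sqrt (real n) * (real k / real n - \<theta>)^2
     + sqrt (real n) * (1/real n + (2/real n + 4/(\<theta>*real n) + 4/((1-\<theta>)*real n)))) sequentially"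
proof -
  have th: "0 < \<theta>" "\<theta> < 1" "0 < 1 - \<theta>" using ph by auto
  have ev: "eventually (\<lambda>n. 1 \<le> \<theta> * real n / 2 \<and> 1 \<le> (1 - \<theta>) * real n / 2) sequentially"
    using th by (intro eventually_conj) real_asymp+
  show ?thesis
  proof (rule eventually_mono[OF ev], intro allI impI)
    fix n k assume H: "1 \<le> \<theta> * real n / 2 \<and> 1 \<le> (1 - \<theta>) * real n / 2"
      and k: "k \<le> n" and tk: "\<bar>real k / real n - \<theta>\<bar> \<le> \<delta>"
    have n0: "real n > 0" "n > 0" using H th by (auto intro: ccontr)
    note kb = k_bounds[OF th(1,2) n0(2) k d(1,2) tk]
    have k1: "1 \<le> k" using kb(1) H by simp
    have "1 \<le> real (n - k)" using kb(2) H by linarith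
    then have kn: "k < n" by linarith
    have tphi: "\<phi> \<le> real k / real n" using tk d(3) by (simp add: abs_le_iff)
    have t1: "\<bar>real k / real n - \<theta>\<bar> \<le> \<theta>/2" "\<bar>real k / real n - \<theta>\<bar> \<le> (1-\<theta>)/2"
      using tk d by auto
    note core = part1_core[OF ph k1 kn refl tphi t1]
    have eb: "2/real n + 2/real k + 2/real (n-k) \<le> 2/real n + 4/(\<theta>*real n) + 4/((1-\<theta>)*real n)"
      by (rule err_bound[OF th(1,2) n0(1) kb])
    have "sqrt (real n) * (1 / real n + (2/real n + 2/real k + 2/real (n-k)))
        \<le> sqrt (real n) * (1/real n + (2/real n + 4/(\<theta>*real n) + 4/((1-\<theta>)*real n)))"
      using eb by (intro mult_left_mono) auto
    then show "\<bar>- sqrt (real n) * ln (sqrt (2 * pi * \<theta> * (1 - \<theta>)) * P_PBR n (real k / real n) \<phi> / (sqrt (real n) * P_CH n (real k / real n) \<phi>))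
     + sqrt (real n) * (- (1/\<theta> - 1/(1-\<theta>))/2) * (real k / real n - \<theta>)\<bar>
   \<le> (1/\<theta>^2 + 1/(1-\<theta>)^2) * sqrt (real n) * (real k / real n - \<theta>)^2
     + sqrt (real n) * (1/real n + (2/real n + 4/(\<theta>*real n) + 4/((1-\<theta>)*real n)))"
      using core by linarith
  qed
qed

lemma part2_det:
  fixes \<phi> \<theta> \<delta> \<rho>1 :: real
  assumes ph: "0 < \<phi>" "\<phi> < \<theta>" "\<theta> < 1"
    and d: "\<delta> \<le> \<theta>/2" "\<delta> \<le> (1-\<theta>)/2" "\<delta> \<le> (\<theta>-\<phi>)/2" "0 < \<delta>"
    and r1: "\<rho>1 = (1 - (\<theta> - \<delta>)) / (\<theta> - \<delta>) * (\<phi> / (1 - \<phi>))"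
  shows "eventually (\<lambda>n. \<forall>k\<le>n. \<bar>real k / real n - \<theta>\<bar> \<le> \<delta> \<longrightarrow>
   \<bar>- sqrt (real n) * ln ((\<theta> - \<phi>) / (1 - \<phi>) * sqrt (2 * pi * (1 - \<theta>) / \<theta>)
                    * (sqrt (real n) * P_X n (real k / real n) \<phi>) / P_CH n (real k / real n) \<phi>)
     + sqrt (real n) * (- (1/(\<theta>-\<phi>) - 1/(2*\<theta>) - 1/(2*(1-\<theta>)))) * (real k / real n - \<theta>)\<bar>
   \<le> (2/(\<theta>-\<phi>)^2 + 1/\<theta>^2 + 1/(1-\<theta>)^2) * sqrt (real n) * (real k / real n - \<theta>)^2
     + sqrt (real n) * ((2/real n + 4/(\<theta>*real n) + 4/((1-\<theta>)*real n))
        + (4 * real n powr (1/4) / (\<theta> * (1-\<theta>) * real n) / (1 - \<rho>1) + 2 * \<rho>1 powr (real n powr (1/4))))) sequentially"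
proof -
  have th: "0 < \<theta>" "\<theta> < 1" "0 < 1 - \<theta>" "\<phi> < 1" using ph by auto
  define t0 where "t0 = \<theta> - \<delta>"
  have t0: "\<phi> < t0" "0 < t0" "t0 < 1" using d ph unfolding t0_def by auto
  have r1': "\<rho>1 = (1 - t0) / t0 * (\<phi> / (1 - \<phi>))" using r1 by (simp add: t0_def)
  have r1p: "0 < \<rho>1" unfolding r1' using t0 ph th by simp
  have r1l: "\<rho>1 < 1"
  proof -
    have "(1 - t0) * \<phi> < t0 * (1 - \<phi>)" using t0 by (simp add: algebra_simps)
    then show ?thesis unfolding r1' using t0 th by (simp add: field_simps)
  qed
  have ev: "eventually (\<lambda>n. 1 \<le> \<theta> * real n / 2 \<and> 1 \<le> (1 - \<theta>) * real n / 2
      \<and> real n powr (1/4) \<le> (1 - \<theta>) * real n / 2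
      \<and> 4 * real n powr (1/4) / (\<theta> * (1-\<theta>) * real n) \<le> 1
      \<and> \<rho>1 powr (real n powr (1/4)) \<le> 1/2) sequentially"
    using th r1p r1l by (intro eventually_conj) real_asymp+
  show ?thesis
  proof (rule eventually_mono[OF ev], intro allI impI)
    fix n k assume H: "1 \<le> \<theta> * real n / 2 \<and> 1 \<le> (1 - \<theta>) * real n / 2
      \<and> real n powr (1/4) \<le> (1 - \<theta>) * real n / 2
      \<and> 4 * real n powr (1/4) / (\<theta> * (1-\<theta>) * real n) \<le> 1
      \<and> \<rho>1 powr (real n powr (1/4)) \<le> 1/2"
      and k: "k \<le> n" and tk: "\<bar>real k / real n - \<theta>\<bar> \<le> \<delta>"
    have n0: "real n > 0" "n > 0" using H th by (auto intro: ccontr)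
    note kb = k_bounds[OF th(1,2) n0(2) k d(1,2) tk]
    have k1: "1 \<le> k" using kb(1) H by simp
    have "1 \<le> real (n - k)" using kb(2) H by linarith
    then have kn: "k < n" by linarith
    have kp: "real k > 0" using k1 by simp
    define N where "N = nat \<lfloor>real n powr (1/4)\<rfloor>"
    have N1: "real N \<le> real n powr (1/4)" unfolding N_def by (simp add: of_nat_nat)
    have N2: "real n powr (1/4) \<le> real (Suc N)"
    proof -
      have "real n powr (1/4) < real_of_int \<lfloor>real n powr (1/4)\<rfloor> + 1" by (rule real_of_int_floor_add_one_gt)
      moreover have "real_of_int \<lfloor>real n powr (1/4)\<rfloor> = real N" unfolding N_def by (simp add: of_nat_nat)
      ultimately show ?thesis by simp
    qed
    have kN: "k + N \<le> n"
    proof -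
      have "real N \<le> real (n - k)" using N1 H kb(2) by linarith
      then show ?thesis using kn by linarith
    qed
    define t where "t = real k / real n"
    have tt0: "t0 \<le> t" using tk unfolding t0_def t_def by (simp add: abs_le_iff)
    have tphi: "\<phi> < t" using tt0 t0 by simp
    have t1: "\<bar>t - \<theta>\<bar> \<le> \<theta>/2" "\<bar>t - \<theta>\<bar> \<le> (1-\<theta>)/2" "\<bar>t - \<theta>\<bar> \<le> (\<theta>-\<phi>)/2"
      using tk d unfolding t_def by auto
    define \<rho> where "\<rho> = real (n-k) / real k * (\<phi> / (1 - \<phi>))"
    have rle: "\<rho> \<le> \<rho>1"
    proof -
      have "real n * t0 \<le> real k" using tt0 n0 unfolding t_def by (simp add: field_simps)
      then have "real (n-k) * t0 \<le> (1 - t0) * real k" using kn by (simp add: of_nat_diff algebra_simps)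
      then have "real (n-k) / real k \<le> (1 - t0) / t0" using kp t0 by (simp add: divide_simps)
      then show ?thesis unfolding \<rho>_def r1' using ph th by (intro mult_right_mono) auto
    qed
    have r0: "0 \<le> \<rho>" unfolding \<rho>_def using ph th by simp
    have rl: "\<rho> < 1" using rle r1l by simp
    define \<epsilon> where "\<epsilon> = real N * real n / (real k * real (n - k))"
    have e0: "0 \<le> \<epsilon>" unfolding \<epsilon>_def by simp
    have ele: "\<epsilon> \<le> 4 * real n powr (1/4) / (\<theta> * (1-\<theta>) * real n)"
    proof -
      have "\<epsilon> \<le> (real n powr (1/4) * real n) / ((\<theta> * real n / 2) * ((1 - \<theta>) * real n / 2))"
        unfolding \<epsilon>_def
      proof (rule frac_le)
        show "0 \<le> real n powr (1/4) * real n" by simp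
        show "real N * real n \<le> real n powr (1/4) * real n" using N1 by (intro mult_right_mono) auto
        show "0 < \<theta> * real n / 2 * ((1 - \<theta>) * real n / 2)" using th n0 by simp
        show "\<theta> * real n / 2 * ((1 - \<theta>) * real n / 2) \<le> real k * real (n - k)"
          using kb th n0 by (intro mult_mono) auto
      qed
      also have "\<dots> = 4 * real n powr (1/4) / (\<theta> * (1-\<theta>) * real n)"
        using th n0 by (simp add: field_simps)
      finally show ?thesis .
    qed
    have e1: "\<epsilon> \<le> 1" using ele H by linarith
    have rpow: "\<rho>^Suc N \<le> \<rho>1 powr (real n powr (1/4))"
    proof -
      have "\<rho>^Suc N \<le> \<rho>1^Suc N" using r0 rle by (intro power_mono) auto
      also have "\<dots> = \<rho>1 powr real (Suc N)" using powr_realpow[OF r1p, of "Suc N"] by (simp only:)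
      also have "\<dots> \<le> \<rho>1 powr (real n powr (1/4))" using N2 r1p r1l by (intro powr_mono') auto
      finally show ?thesis .
    qed
    have rs: "\<rho>^Suc N \<le> 1/2" using rpow H by linarith
    note core = part2_core[OF ph k1 kn kN t_def tphi t1 \<rho>_def rl \<epsilon>_def e1 rs]
    have eb: "2/real n + 2/real k + 2/real (n-k) \<le> 2/real n + 4/(\<theta>*real n) + 4/((1-\<theta>)*real n)"
      by (rule err_bound[OF th(1,2) n0(1) kb])
    have eb2: "\<epsilon> / (1 - \<rho>) \<le> 4 * real n powr (1/4) / (\<theta> * (1-\<theta>) * real n) / (1 - \<rho>1)"
      by (rule frac_le) (use e0 ele r1l rle in auto)
    have "sqrt (real n) * ((2/real n + 2/real k + 2/real (n-k)) + (\<epsilon> / (1 - \<rho>) + 2 * \<rho>^Suc N))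
        \<le> sqrt (real n) * ((2/real n + 4/(\<theta>*real n) + 4/((1-\<theta>)*real n))
        + (4 * real n powr (1/4) / (\<theta> * (1-\<theta>) * real n) / (1 - \<rho>1) + 2 * \<rho>1 powr (real n powr (1/4))))"
      using eb eb2 rpow by (intro mult_left_mono) auto
    then show "\<bar>- sqrt (real n) * ln ((\<theta> - \<phi>) / (1 - \<phi>) * sqrt (2 * pi * (1 - \<theta>) / \<theta>)
                    * (sqrt (real n) * P_X n (real k / real n) \<phi>) / P_CH n (real k / real n) \<phi>)
     + sqrt (real n) * (- (1/(\<theta>-\<phi>) - 1/(2*\<theta>) - 1/(2*(1-\<theta>)))) * (real k / real n - \<theta>)\<bar>
   \<le> (2/(\<theta>-\<phi>)^2 + 1/\<theta>^2 + 1/(1-\<theta>)^2) * sqrt (real n) * (real k / real n - \<theta>)^2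
     + sqrt (real n) * ((2/real n + 4/(\<theta>*real n) + 4/((1-\<theta>)*real n))
        + (4 * real n powr (1/4) / (\<theta> * (1-\<theta>) * real n) / (1 - \<rho>1) + 2 * \<rho>1 powr (real n powr (1/4))))"
      using core unfolding t_def by linarith
  qed
qed

theorem mainTheorem10:
  fixes M :: "'a measure" and B :: "nat \<Rightarrow> 'a \<Rightarrow> real" and \<phi> \<theta> :: real
  assumes "prob_space M"
    and "0 < \<phi>" and "\<phi> < \<theta>" and "\<theta> < 1"
    and meas: "\<And>i. B i \<in> borel_measurable M"
    and indep: "prob_space.indep_vars M (\<lambda>_. borel) B UNIV"
    and bern01: "\<And>i. AE \<omega> in M. B i \<omega> = 0 \<or> B i \<omega> = 1"
    and bernp: "\<And>i. measure M {\<omega> \<in> space M. B i \<omega> = 1} = \<theta>"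
  defines "Th \<equiv> \<lambda>n \<omega>. (\<Sum>i<n. B i \<omega>) / real n"
  shows "(\<theta> \<noteq> 1/2 \<longrightarrow>
           weak_conv_m
             (\<lambda>n. distr M borel (\<lambda>\<omega>. - sqrt (real n) *
                ln (sqrt (2 * pi * \<theta> * (1 - \<theta>)) * P_PBR n (Th n \<omega>) \<phi>
                    / (sqrt (real n) * P_CH n (Th n \<omega>) \<phi>))))
             (normal_distribution 0 ((1 - 2 * \<theta>)\<^sup>2 / (4 * \<theta> * (1 - \<theta>)))))
       \<and> (\<phi> \<noteq> \<theta> * (2 * \<theta> - 1) \<longrightarrow>
           weak_conv_m
             (\<lambda>n. distr M borel (\<lambda>\<omega>. - sqrt (real n) *
                ln ((\<theta> - \<phi>) / (1 - \<phi>) * sqrt (2 * pi * (1 - \<theta>) / \<theta>)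
                    * (sqrt (real n) * P_X n (Th n \<omega>) \<phi>) / P_CH n (Th n \<omega>) \<phi>)))
             (normal_distribution 0 ((\<theta> * (1 - 2 * \<theta>) + \<phi>)\<^sup>2
                / (4 * (\<theta> - \<phi>)\<^sup>2 * \<theta> * (1 - \<theta>)))))"
proof -
  have th: "0 < \<theta>" "\<theta> < 1" "0 < 1 - \<theta>" "0 < \<theta> - \<phi>" using assms(2,3,4) by auto
  note ph = assms(2,3,4)
  define \<delta> where "\<delta> = min (min (\<theta>/2) ((1-\<theta>)/2)) ((\<theta>-\<phi>)/2)"
  have d: "\<delta> \<le> \<theta>/2" "\<delta> \<le> (1-\<theta>)/2" "\<delta> \<le> (\<theta>-\<phi>)/2" "0 < \<delta>"
    unfolding \<delta>_def using th by (meson min.cobounded1 min.cobounded2 order.trans, meson min.cobounded1 min.cobounded2 order.trans,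
      meson min.cobounded1 min.cobounded2 order.trans, simp)
  have P1: "weak_conv_m
             (\<lambda>n. distr M borel (\<lambda>\<omega>. - sqrt (real n) *
                ln (sqrt (2 * pi * \<theta> * (1 - \<theta>)) * P_PBR n (Th n \<omega>) \<phi>
                    / (sqrt (real n) * P_CH n (Th n \<omega>) \<phi>))))
             (normal_distribution 0 ((1 - 2 * \<theta>)\<^sup>2 / (4 * \<theta> * (1 - \<theta>))))"
    if h: "\<theta> \<noteq> 1/2"
  proof -
    define D where "D = - (1/\<theta> - 1/(1-\<theta>))/2"
    have D0: "D \<noteq> 0"
    proof
      assume "D = 0"
      then have "1/\<theta> = 1/(1-\<theta>)" unfolding D_def by simp
      then have "\<theta> = 1 - \<theta>" using th by (simp add: field_simps)
      then show False using h by simp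
    qed
    have Deq: "D = (2*\<theta> - 1)/(2*\<theta>*(1-\<theta>))" unfolding D_def using th by (simp add: field_simps)
    have "D^2 * (\<theta> * (1 - \<theta>)) = ((2*\<theta> - 1)^2 * (\<theta> * (1 - \<theta>))) / ((2*\<theta>*(1-\<theta>))^2)"
      unfolding Deq by (simp add: power_divide)
    also have "\<dots> = (1 - 2 * \<theta>)\<^sup>2 / (4 * \<theta> * (1 - \<theta>))"
      using th by (simp add: frac_eq_eq power2_eq_square) algebra
    finally have var: "D^2 * (\<theta> * (1 - \<theta>)) = (1 - 2 * \<theta>)\<^sup>2 / (4 * \<theta> * (1 - \<theta>))" .
    have e: "(\<lambda>n. sqrt (real n) * (1/real n + (2/real n + 4/(\<theta>*real n) + 4/((1-\<theta>)*real n)))) \<longlonglongrightarrow> 0"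
      using th by real_asymp
    have Fm: "(\<lambda>t. - sqrt (real n) * ln (sqrt (2 * pi * \<theta> * (1 - \<theta>)) * P_PBR n t \<phi> / (sqrt (real n) * P_CH n t \<phi>))) \<in> borel_measurable borel" for n
      unfolding P_PBR_def P_CH_def Let_def by measurable
    have "weak_conv_m (\<lambda>n. distr M borel (\<lambda>\<omega>. (\<lambda>n t. - sqrt (real n) * ln (sqrt (2 * pi * \<theta> * (1 - \<theta>)) * P_PBR n t \<phi> / (sqrt (real n) * P_CH n t \<phi>))) n ((\<Sum>i<n. B i \<omega>) / real n)))
           (normal_distribution 0 (D^2 * (\<theta> * (1 - \<theta>))))"
      by (rule generic_clt[OF assms(1) th(1,2) D0 meas indep bern01 bernp Fm d(4) e])
        (unfold D_def, rule part1_det[OF ph d(1,2,3)])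
    then show ?thesis unfolding var Th_def by simp
  qed
  have P2: "weak_conv_m
             (\<lambda>n. distr M borel (\<lambda>\<omega>. - sqrt (real n) *
                ln ((\<theta> - \<phi>) / (1 - \<phi>) * sqrt (2 * pi * (1 - \<theta>) / \<theta>)
                    * (sqrt (real n) * P_X n (Th n \<omega>) \<phi>) / P_CH n (Th n \<omega>) \<phi>)))
             (normal_distribution 0 ((\<theta> * (1 - 2 * \<theta>) + \<phi>)\<^sup>2
                / (4 * (\<theta> - \<phi>)\<^sup>2 * \<theta> * (1 - \<theta>))))"
    if h: "\<phi> \<noteq> \<theta> * (2 * \<theta> - 1)"
  proof -
    define D where "D = - (1/(\<theta>-\<phi>) - 1/(2*\<theta>) - 1/(2*(1-\<theta>)))"
    have a: "1/(2*\<theta>) + 1/(2*(1-\<theta>)) = 1/(2*\<theta>*(1-\<theta>))" using th by (simp add: field_simps)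
    have b: "1/(\<theta>-\<phi>) - 1/(2*\<theta>*(1-\<theta>)) = (1*(2*\<theta>*(1-\<theta>)) - 1*(\<theta>-\<phi>))/((\<theta>-\<phi>)*(2*\<theta>*(1-\<theta>)))"
      using th by (intro diff_frac_eq) auto
    have n1: "1*(2*\<theta>*(1-\<theta>)) - 1*(\<theta>-\<phi>) = \<theta> * (1 - 2 * \<theta>) + \<phi>" by algebra
    have n2: "(\<theta>-\<phi>)*(2*\<theta>*(1-\<theta>)) = 2 * \<theta> * (1 - \<theta>) * (\<theta> - \<phi>)" by algebra
    have Deq: "D = - ((\<theta> * (1 - 2 * \<theta>) + \<phi>) / (2 * \<theta> * (1 - \<theta>) * (\<theta> - \<phi>)))"
    proof -
      have "D = -(1/(\<theta>-\<phi>) - (1/(2*\<theta>) + 1/(2*(1-\<theta>))))" unfolding D_def by simp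
      also have "\<dots> = - ((\<theta> * (1 - 2 * \<theta>) + \<phi>) / (2 * \<theta> * (1 - \<theta>) * (\<theta> - \<phi>)))"
        unfolding a b n1 n2 ..
      finally show ?thesis .
    qed
    have D0: "D \<noteq> 0"
    proof
      assume "D = 0"
      then have "\<theta> * (1 - 2 * \<theta>) + \<phi> = 0" unfolding Deq using th by simp
      then show False using h by (simp add: algebra_simps)
    qed
    have "D^2 * (\<theta> * (1 - \<theta>)) = ((\<theta> * (1 - 2 * \<theta>) + \<phi>)^2 * (\<theta> * (1 - \<theta>))) / ((2 * \<theta> * (1 - \<theta>) * (\<theta> - \<phi>))^2)"
      unfolding Deq by (simp add: power_divide)
    also have "\<dots> = (\<theta> * (1 - 2 * \<theta>) + \<phi>)\<^sup>2 / (4 * (\<theta> - \<phi>)\<^sup>2 * \<theta> * (1 - \<theta>))"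
      using th by (simp add: frac_eq_eq power2_eq_square)
    finally have var: "D^2 * (\<theta> * (1 - \<theta>)) = (\<theta> * (1 - 2 * \<theta>) + \<phi>)\<^sup>2 / (4 * (\<theta> - \<phi>)\<^sup>2 * \<theta> * (1 - \<theta>))" .
    define \<rho>1 where "\<rho>1 = (1 - (\<theta> - \<delta>)) / (\<theta> - \<delta>) * (\<phi> / (1 - \<phi>))"
    have r1: "0 < \<rho>1" "\<rho>1 < 1"
    proof -
      define t0 where "t0 = \<theta> - \<delta>"
      have t0: "\<phi> < t0" "0 < t0" "t0 < 1" using d th unfolding t0_def by auto
      have r1': "\<rho>1 = (1 - t0) / t0 * (\<phi> / (1 - \<phi>))" by (simp add: \<rho>1_def t0_def)
      show "0 < \<rho>1" unfolding r1' using t0 ph by simp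
      have "(1 - t0) * \<phi> < t0 * (1 - \<phi>)" using t0 by (simp add: algebra_simps)
      then show "\<rho>1 < 1" unfolding r1' using t0 th ph by (simp add: field_simps)
    qed
    have e: "(\<lambda>n. sqrt (real n) * ((2/real n + 4/(\<theta>*real n) + 4/((1-\<theta>)*real n))
        + (4 * real n powr (1/4) / (\<theta> * (1-\<theta>) * real n) / (1 - \<rho>1) + 2 * \<rho>1 powr (real n powr (1/4))))) \<longlonglongrightarrow> 0"
      using th r1 by real_asymp
    have Fm: "(\<lambda>t. - sqrt (real n) * ln ((\<theta> - \<phi>) / (1 - \<phi>) * sqrt (2 * pi * (1 - \<theta>) / \<theta>)
                    * (sqrt (real n) * P_X n t \<phi>) / P_CH n t \<phi>)) \<in> borel_measurable borel" for n
      unfolding P_X_def P_CH_def Let_def by measurable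
    have "weak_conv_m (\<lambda>n. distr M borel (\<lambda>\<omega>. (\<lambda>n t. - sqrt (real n) * ln ((\<theta> - \<phi>) / (1 - \<phi>) * sqrt (2 * pi * (1 - \<theta>) / \<theta>)
                    * (sqrt (real n) * P_X n t \<phi>) / P_CH n t \<phi>)) n ((\<Sum>i<n. B i \<omega>) / real n)))
           (normal_distribution 0 (D^2 * (\<theta> * (1 - \<theta>))))"
      by (rule generic_clt[OF assms(1) th(1,2) D0 meas indep bern01 bernp Fm d(4) e])
        (unfold D_def, rule part2_det[OF ph d \<rho>1_def])
    then show ?thesis unfolding var Th_def by simp
  qed
  show ?thesis using P1 P2 by blast
qed

end
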